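(* There is the following behaviour of the Wainwright–Hsu flow $\Phi$: for every $\epsilon>0$ there exist a Bianchi VIII point $y_\epsilon\in\mathbb{R}^5$ satisfying the constraint, whose Euclidean distance in $\mathbb{R}^5$ to the Kasner circle is less than $\epsilon$, and a real number $T_\epsilon>0$, such that $\Phi(-T_\epsilon,y_\epsilon)=(\Sigma_+,\Sigma_-,N_1,N_2,N_3)$ is a Bianchi VIII point with $|N_1N_2|+|N_2N_3|+|N_3N_1|\geq\frac14$.
   Context: Wainwright–Hsu system: for functions $N_1,N_2,N_3,\Sigma_+,\Sigma_-$ of $\tau\in\mathbb{R}$ (prime denotes $d/d\tau$), $N_1'=(q-4\Sigma_+)N_1$, $N_2'=(q+2\Sigma_++2\sqrt3\Sigma_-)N_2$, $N_3'=(q+2\Sigma_+-2\sqrt3\Sigma_-)N_3$, $\Sigma_+'=-(2-q)\Sigma_+-3S_+$, $\Sigma_-'=-(2-q)\Sigma_--3S_-$, where $q=2(\Sigma_+^2+\Sigma_-^2)$, $S_+=\frac12[(N_2-N_3)^2-N_1(2N_1-N_2-N_3)]$, $S_-=\frac{\sqrt3}{2}(N_3-N_2)(N_1-N_2-N_3)$, together with the constraint $\Sigma_+^2+\Sigma_-^2+\frac34[N_1^2+N_2^2+N_3^2-2(N_1N_2+N_2N_3+N_1N_3)]=1$. $\Phi(\tau,x)$ denotes the solution with initial value $x$ at $\tau=0$ evaluated at time $\tau$ (defined for all $\tau$ for non–type IX $x$). A Bianchi VIII point is one with all $N_i\neq0$, two of them of one sign and the third of the opposite sign. The Kasner circle is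 the set $N_1=N_2=N_3=0$, $\Sigma_+^2+\Sigma_-^2=1$. *)

theory Defs
  imports "HOL-Analysis.Analysis"
begin

text \<open>States are points (Sigma_plus, Sigma_minus, N1, N2, N3) of R^5, represented as
  nested pairs; the product norm is the Euclidean norm of R^5.\<close>

type_synonym wh_state = "real \<times> real \<times> real \<times> real \<times> real"

definition wh_q :: "real \<Rightarrow> real \<Rightarrow> real" where
  "wh_q sp sm = 2 * (sp\<^sup>2 + sm\<^sup>2)"

definition wh_Splus :: "real \<Rightarrow> real \<Rightarrow> real \<Rightarrow> real" where
  "wh_Splus n1 n2 n3 = (1/2) * ((n2 - n3)\<^sup>2 - n1 * (2*n1 - n2 - n3))"

definition wh_Sminus :: "real \<Rightarrow> real \<Rightarrow> real \<Rightarrow> real" where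
  "wh_Sminus n1 n2 n3 = (sqrt 3 / 2) * (n3 - n2) * (n1 - n2 - n3)"

definition wh_field :: "wh_state \<Rightarrow> wh_state" where
  "wh_field x = (case x of (sp, sm, n1, n2, n3) \<Rightarrow>
     (let q = wh_q sp sm in
      (-(2 - q) * sp - 3 * wh_Splus n1 n2 n3,
       -(2 - q) * sm - 3 * wh_Sminus n1 n2 n3,
       (q - 4 * sp) * n1,
       (q + 2 * sp + 2 * sqrt 3 * sm) * n2,
       (q + 2 * sp - 2 * sqrt 3 * sm) * n3)))"

definition wh_constraint :: "wh_state \<Rightarrow> bool" where
  "wh_constraint x = (case x of (sp, sm, n1, n2, n3) \<Rightarrow>
     sp\<^sup>2 + sm\<^sup>2 + (3/4) * (n1\<^sup>2 + n2\<^sup>2 + n3\<^sup>2 - 2 * (n1*n2 + n2*n3 + n1*n3)) = 1)"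

definition wh_solution :: "(real \<Rightarrow> wh_state) \<Rightarrow> bool" where
  "wh_solution \<phi> = (\<forall>t. (\<phi> has_vector_derivative wh_field (\<phi> t)) (at t))"

definition Phi :: "real \<Rightarrow> wh_state \<Rightarrow> wh_state" where
  "Phi \<tau> x = (THE \<phi>. wh_solution \<phi> \<and> \<phi> 0 = x) \<tau>"

definition bianchi_VIII :: "wh_state \<Rightarrow> bool" where
  "bianchi_VIII x = (case x of (sp, sm, n1, n2, n3) \<Rightarrow>
     n1 \<noteq> 0 \<and> n2 \<noteq> 0 \<and> n3 \<noteq> 0 \<and>
     ((sgn n1 = sgn n2 \<and> sgn n3 = - sgn n1) \<or>
      (sgn n2 = sgn n3 \<and> sgn n1 = - sgn n2) \<or>
      (sgn n1 = sgn n3 \<and> sgn n2 = - sgn n1)))"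

definition kasner_circle :: "wh_state set" where
  "kasner_circle = {(sp, sm, 0, 0, 0) | sp sm. sp\<^sup>2 + sm\<^sup>2 = 1}"

end

theory Submission
  imports Defs
begin

definition cS1 :: "wh_state \<Rightarrow> real" where "cS1 x = fst x"
definition cS2 :: "wh_state \<Rightarrow> real" where "cS2 x = fst (snd x)"
definition cN1 :: "wh_state \<Rightarrow> real" where "cN1 x = fst (snd (snd x))"
definition cN2 :: "wh_state \<Rightarrow> real" where "cN2 x = fst (snd (snd (snd x)))"
definition cN3 :: "wh_state \<Rightarrow> real" where "cN3 x = snd (snd (snd (snd x)))"

lemma c_simps[simp]: "cS1 (a,b,c,d,e) = a" "cS2 (a,b,c,d,e) = b" "cN1 (a,b,c,d,e) = c"
  "cN2 (a,b,c,d,e) = d" "cN3 (a,b,c,d,e) = e"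
  by (simp_all add: cS1_def cS2_def cN1_def cN2_def cN3_def)

lemma state_eq: "x = (cS1 x, cS2 x, cN1 x, cN2 x, cN3 x)"
  by (simp add: cS1_def cS2_def cN1_def cN2_def cN3_def)

lemma state_ext: "cS1 x = cS1 y \<Longrightarrow> cS2 x = cS2 y \<Longrightarrow> cN1 x = cN1 y \<Longrightarrow> cN2 x = cN2 y \<Longrightarrow> cN3 x = cN3 y \<Longrightarrow> x = y"
  by (metis state_eq)

lemma c_minus[simp]: "cS1 (x - y) = cS1 x - cS1 y" "cS2 (x - y) = cS2 x - cS2 y"
  "cN1 (x - y) = cN1 x - cN1 y" "cN2 (x - y) = cN2 x - cN2 y" "cN3 (x - y) = cN3 x - cN3 y"
  by (simp_all add: cS1_def cS2_def cN1_def cN2_def cN3_def)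

lemma c_plus[simp]: "cS1 (x + y) = cS1 x + cS1 y" "cS2 (x + y) = cS2 x + cS2 y"
  "cN1 (x + y) = cN1 x + cN1 y" "cN2 (x + y) = cN2 x + cN2 y" "cN3 (x + y) = cN3 x + cN3 y"
  by (simp_all add: cS1_def cS2_def cN1_def cN2_def cN3_def)

lemma c_zero[simp]: "cS1 0 = 0" "cS2 0 = 0" "cN1 0 = 0" "cN2 0 = 0" "cN3 0 = 0"
  by (simp_all add: cS1_def cS2_def cN1_def cN2_def cN3_def)

lemma norm_sq_state: "(norm x)\<^sup>2 = (cS1 x)\<^sup>2 + (cS2 x)\<^sup>2 + (cN1 x)\<^sup>2 + (cN2 x)\<^sup>2 + (cN3 x)\<^sup>2"
proof -
  obtain a b c d e where x: "x = (a,b,c,d,e)" by (metis state_eq)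
  show ?thesis unfolding x by (simp add: norm_Pair power2_eq_square)
qed

lemma inner_state: "inner x y = cS1 x * cS1 y + cS2 x * cS2 y + cN1 x * cN1 y + cN2 x * cN2 y + cN3 x * cN3 y"
proof -
  obtain a b c d e where x: "x = (a,b,c,d,e)" by (metis state_eq)
  obtain a' b' c' d' e' where y: "y = (a',b',c',d',e')" by (metis state_eq)
  show ?thesis unfolding x y by simp
qed

lemma sq_le_norm_abs: "a\<^sup>2 \<le> (norm x)\<^sup>2 \<Longrightarrow> \<bar>a\<bar> \<le> norm (x::'a::real_normed_vector)"
  by (rule power2_le_imp_le) auto

lemma comp_le_norm: "\<bar>cS1 x\<bar> \<le> norm x" "\<bar>cS2 x\<bar> \<le> norm x" "\<bar>cN1 x\<bar> \<le> norm x"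
  "\<bar>cN2 x\<bar> \<le> norm x" "\<bar>cN3 x\<bar> \<le> norm x"
  using norm_sq_state[of x]
  by (auto intro!: sq_le_norm_abs)


definition wq :: "wh_state \<Rightarrow> real" where "wq x = 2 * ((cS1 x)\<^sup>2 + (cS2 x)\<^sup>2)"

lemma field_comps:
  "cS1 (wh_field x) = -(2 - wq x) * cS1 x - 3 * wh_Splus (cN1 x) (cN2 x) (cN3 x)"
  "cS2 (wh_field x) = -(2 - wq x) * cS2 x - 3 * wh_Sminus (cN1 x) (cN2 x) (cN3 x)"
  "cN1 (wh_field x) = (wq x - 4 * cS1 x) * cN1 x"
  "cN2 (wh_field x) = (wq x + 2 * cS1 x + 2 * sqrt 3 * cS2 x) * cN2 x"
  "cN3 (wh_field x) = (wq x + 2 * cS1 x - 2 * sqrt 3 * cS2 x) * cN3 x"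
proof -
  obtain a b c d e where x: "x = (a,b,c,d,e)" by (metis state_eq)
  show "cS1 (wh_field x) = -(2 - wq x) * cS1 x - 3 * wh_Splus (cN1 x) (cN2 x) (cN3 x)"
    "cS2 (wh_field x) = -(2 - wq x) * cS2 x - 3 * wh_Sminus (cN1 x) (cN2 x) (cN3 x)"
    "cN1 (wh_field x) = (wq x - 4 * cS1 x) * cN1 x"
    "cN2 (wh_field x) = (wq x + 2 * cS1 x + 2 * sqrt 3 * cS2 x) * cN2 x"
    "cN3 (wh_field x) = (wq x + 2 * cS1 x - 2 * sqrt 3 * cS2 x) * cN3 x"
    unfolding x by (simp_all add: wh_field_def wq_def wh_q_def Let_def)
qed

lemma vd_comp:
  assumes "(f has_vector_derivative v) F"
  shows "((\<lambda>t. cS1 (f t)) has_real_derivative cS1 v) F"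
    "((\<lambda>t. cS2 (f t)) has_real_derivative cS2 v) F"
    "((\<lambda>t. cN1 (f t)) has_real_derivative cN1 v) F"
    "((\<lambda>t. cN2 (f t)) has_real_derivative cN2 v) F"
    "((\<lambda>t. cN3 (f t)) has_real_derivative cN3 v) F"
  using assms
  by (auto simp: has_real_derivative_iff_has_vector_derivative has_vector_derivative_def
      cS1_def cS2_def cN1_def cN2_def cN3_def intro!: derivative_eq_intros)

lemma cont_comp:
  assumes "continuous_on S f"
  shows "continuous_on S (\<lambda>t. cS1 (f t))" "continuous_on S (\<lambda>t. cS2 (f t))"
    "continuous_on S (\<lambda>t. cN1 (f t))" "continuous_on S (\<lambda>t. cN2 (f t))"
    "continuous_on S (\<lambda>t. cN3 (f t))"
  using assms by (auto simp: cS1_def cS2_def cN1_def cN2_def cN3_def intro!: continuous_intros)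

lemma gronwall_up:
  fixes g g' :: "real \<Rightarrow> real"
  assumes "a \<le> b"
    and d: "\<And>t. t \<in> {a..b} \<Longrightarrow> (g has_real_derivative g' t) (at t)"
    and le: "\<And>t. t \<in> {a..b} \<Longrightarrow> g' t \<le> L * g t"
  shows "g b \<le> g a * exp (L * (b - a))"
proof -
  define h where "h t = g t * exp (- L * (t - a))" for t
  have "h b \<le> h a"
  proof -
    have "- h a \<le> - h b"
    proof (rule deriv_nonneg_imp_mono[where g="\<lambda>t. - h t" and g'="\<lambda>t. - (g' t - L * g t) * exp (- L * (t - a))"])
      fix t assume t: "t \<in> {a..b}"
      show "((\<lambda>t. - h t) has_real_derivative - (g' t - L * g t) * exp (- L * (t - a))) (at t)"
        unfolding h_def using d[OF t]
        by (auto intro!: derivative_eq_intros simp: algebra_simps)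
      show "0 \<le> - (g' t - L * g t) * exp (- L * (t - a))"
        using le[OF t] by (auto intro!: mult_nonneg_nonneg)
    qed (use assms in auto)
    then show ?thesis by simp
  qed
  then have "g b * exp (- L * (b - a)) \<le> g a" by (simp add: h_def)
  then have "g b * exp (- L * (b - a)) * exp (L * (b - a)) \<le> g a * exp (L * (b - a))"
    by (rule mult_right_mono) simp
  then show ?thesis by (simp add: mult.assoc exp_add[symmetric])
qed

lemma gronwall_low:
  fixes g g' :: "real \<Rightarrow> real"
  assumes "a \<le> b"
    and d: "\<And>t. t \<in> {a..b} \<Longrightarrow> (g has_real_derivative g' t) (at t)"
    and le: "\<And>t. t \<in> {a..b} \<Longrightarrow> - L * g t \<le> g' t"
  shows "g a \<le> g b * exp (L * (b - a))"
proof -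
  define h where "h t = g t * exp (L * (t - a))" for t
  have "h a \<le> h b"
  proof (rule deriv_nonneg_imp_mono[where g="h" and g'="\<lambda>t. (g' t + L * g t) * exp (L * (t - a))"])
    fix t assume t: "t \<in> {a..b}"
    show "(h has_real_derivative (g' t + L * g t) * exp (L * (t - a))) (at t)"
      unfolding h_def using d[OF t]
      by (auto intro!: derivative_eq_intros simp: algebra_simps)
    show "0 \<le> (g' t + L * g t) * exp (L * (t - a))"
      using le[OF t] by (auto intro!: mult_nonneg_nonneg)
  qed (use assms in auto)
  then show ?thesis by (simp add: h_def)
qed


lemma cont_bounded_real:
  fixes c :: "real \<Rightarrow> real"
  assumes "continuous_on {a..b} c"
  obtains K where "\<And>t. t \<in> {a..b} \<Longrightarrow> \<bar>c t\<bar> \<le> K"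
proof -
  have "compact (c ` {a..b})" by (rule compact_continuous_image[OF assms compact_Icc])
  then have "bounded (c ` {a..b})" by (rule compact_imp_bounded)
  then obtain K where "\<forall>x\<in>c ` {a..b}. \<bar>x\<bar> \<le> K" by (auto simp: bounded_real)
  then have "\<And>t. t \<in> {a..b} \<Longrightarrow> \<bar>c t\<bar> \<le> K" by blast
  then show ?thesis by (rule that)
qed

lemma cont_bounded_norm:
  fixes c :: "real \<Rightarrow> 'a::real_normed_vector"
  assumes "continuous_on {a..b} c"
  obtains K where "\<And>t. t \<in> {a..b} \<Longrightarrow> norm (c t) \<le> K"
proof -
  have "compact (c ` {a..b})" by (rule compact_continuous_image[OF assms compact_Icc])
  then have "bounded (c ` {a..b})" by (rule compact_imp_bounded)
  then obtain K where "\<forall>x\<in>c ` {a..b}. norm x \<le> K" by (auto simp: bounded_iff)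
  then have "\<And>t. t \<in> {a..b} \<Longrightarrow> norm (c t) \<le> K" by blast
  then show ?thesis by (rule that)
qed

lemma lin_sq_deriv:
  assumes "(u has_real_derivative c * u t) (at t)"
  shows "((\<lambda>t. (u t)\<^sup>2) has_real_derivative 2 * c * (u t)\<^sup>2) (at t)"
  using assms by (auto intro!: derivative_eq_intros simp: power2_eq_square algebra_simps)

lemma lin_zero:
  fixes u c :: "real \<Rightarrow> real"
  assumes t0: "t0 \<in> {a..b}"
    and d: "\<And>t. t \<in> {a..b} \<Longrightarrow> (u has_real_derivative c t * u t) (at t)"
    and K: "\<And>t. t \<in> {a..b} \<Longrightarrow> \<bar>c t\<bar> \<le> K"
    and z: "u t0 = 0"
    and t: "t \<in> {a..b}"
  shows "u t = 0"
proof -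
  define g where "g t = (u t)\<^sup>2" for t
  have dg: "(g has_real_derivative 2 * c s * g s) (at s)" if "s \<in> {a..b}" for s
    unfolding g_def by (rule lin_sq_deriv[OF d[OF that]])
  have gnn: "g s \<ge> 0" for s by (simp add: g_def)
  have up: "2 * c s * g s \<le> (2*K) * g s" if "s \<in> {a..b}" for s
    using K[OF that] gnn[of s] by (intro mult_right_mono) auto
  have low: "- (2*K) * g s \<le> 2 * c s * g s" if "s \<in> {a..b}" for s
    using K[OF that] gnn[of s] by (intro mult_right_mono) auto
  have "g t \<le> 0"
  proof (cases "t0 \<le> t")
    case True
    have "g t \<le> g t0 * exp ((2*K) * (t - t0))"
      by (rule gronwall_up[OF True, where g'="\<lambda>s. 2 * c s * g s"])
        (use t0 t dg up in auto)
    then show ?thesis using z by (simp add: g_def)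
  next
    case False
    have "g t \<le> g t0 * exp ((2*K) * (t0 - t))"
      by (rule gronwall_low[where g'="\<lambda>s. 2 * c s * g s"]) (use False t0 t dg low in auto)
    then show ?thesis using z by (simp add: g_def)
  qed
  then show ?thesis using gnn[of t] by (simp add: g_def)
qed

lemma lin_nonzero:
  fixes u c :: "real \<Rightarrow> real"
  assumes t0: "t0 \<in> {a..b}"
    and d: "\<And>t. t \<in> {a..b} \<Longrightarrow> (u has_real_derivative c t * u t) (at t)"
    and K: "\<And>t. t \<in> {a..b} \<Longrightarrow> \<bar>c t\<bar> \<le> K"
    and z: "u t0 \<noteq> 0"
    and t: "t \<in> {a..b}"
  shows "u t \<noteq> 0"
proof -
  define g where "g t = (u t)\<^sup>2" for t
  have dg: "(g has_real_derivative 2 * c s * g s) (at s)" if "s \<in> {a..b}" for s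
    unfolding g_def by (rule lin_sq_deriv[OF d[OF that]])
  have gnn: "g s \<ge> 0" for s by (simp add: g_def)
  have up: "2 * c s * g s \<le> (2*K) * g s" if "s \<in> {a..b}" for s
    using K[OF that] gnn[of s] by (intro mult_right_mono) auto
  have low: "- (2*K) * g s \<le> 2 * c s * g s" if "s \<in> {a..b}" for s
    using K[OF that] gnn[of s] by (intro mult_right_mono) auto
  have g0: "g t0 > 0" using z by (simp add: g_def)
  have "g t0 \<le> g t * exp ((2*K) * \<bar>t - t0\<bar>)"
  proof (cases "t0 \<le> t")
    case True
    have "g t0 \<le> g t * exp ((2*K) * (t - t0))"
      by (rule gronwall_low[OF True, where g'="\<lambda>s. 2 * c s * g s"])
        (use t0 t dg low in auto)
    then show ?thesis using True by simp
  next
    case False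
    have "g t0 \<le> g t * exp ((2*K) * (t0 - t))"
      by (rule gronwall_up[where g'="\<lambda>s. 2 * c s * g s"]) (use False t0 t dg up in auto)
    then show ?thesis using False by simp
  qed
  then have "g t > 0" using g0 gnn[of t]
    by (metis less_le_trans mult_eq_0_iff order_less_le)
  then show ?thesis by (auto simp: g_def)
qed

lemma nonzero_same_sign:
  fixes u :: "real \<Rightarrow> real"
  assumes c: "continuous_on {a..b} u"
    and nz: "\<And>t. t \<in> {a..b} \<Longrightarrow> u t \<noteq> 0"
    and s: "s \<in> {a..b}" and t: "t \<in> {a..b}"
  shows "u s * u t > 0"
proof (rule ccontr)
  assume "\<not> u s * u t > 0"
  then have "0 \<in> closed_segment (u s) (u t)"
    using nz[OF s] nz[OF t]
    by (auto simp: closed_segment_eq_real_ivl zero_less_mult_iff not_less mult_le_0_iff)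
  moreover have sub: "closed_segment s t \<subseteq> {a..b}"
    using s t by (auto simp: closed_segment_eq_real_ivl)
  moreover have "continuous_on (closed_segment s t) u"
    using c sub continuous_on_subset by blast
  ultimately obtain x where "x \<in> closed_segment s t" "u x = 0"
    using IVT'_closed_segment_real by blast
  then show False using nz sub by blast
qed



definition blip :: "wh_state set \<Rightarrow> (wh_state \<Rightarrow> real) \<Rightarrow> bool" where
  "blip U f \<longleftrightarrow> (\<exists>L. L-lipschitz_on U f) \<and> (\<exists>B. \<forall>x\<in>U. \<bar>f x\<bar> \<le> B)"

lemma blip_const[intro!]: "blip U (\<lambda>x. c)"
  unfolding blip_def by (auto intro: lipschitz_on_constant)

lemma blip_add[intro!]: "blip U f \<Longrightarrow> blip U g \<Longrightarrow> blip U (\<lambda>x. f x + g x)"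
  unfolding blip_def
  by (auto intro!: lipschitz_on_add exI[where x="_ + _"] abs_triangle_ineq[THEN order_trans] add_mono)

lemma blip_uminus[intro!]: "blip U f \<Longrightarrow> blip U (\<lambda>x. - f x)"
  unfolding blip_def by (auto intro!: lipschitz_on_minus)

lemma blip_diff[intro!]: "blip U f \<Longrightarrow> blip U g \<Longrightarrow> blip U (\<lambda>x. f x - g x)"
  using blip_add[of U f "\<lambda>x. - g x"] blip_uminus[of U g] by simp

lemma blip_mult[intro!]:
  assumes "blip U f" "blip U g"
  shows "blip U (\<lambda>x. f x * g x)"
proof -
  obtain L1 B1 where L1: "L1-lipschitz_on U f" and B1: "\<And>x. x \<in> U \<Longrightarrow> \<bar>f x\<bar> \<le> B1"
    using assms(1) unfolding blip_def by blast
  obtain L2 B2 where L2: "L2-lipschitz_on U g" and B2: "\<And>x. x \<in> U \<Longrightarrow> \<bar>g x\<bar> \<le> B2"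
    using assms(2) unfolding blip_def by blast
  have B1': "\<And>x. x \<in> U \<Longrightarrow> \<bar>f x\<bar> \<le> \<bar>B1\<bar>" using B1 by force
  have B2': "\<And>x. x \<in> U \<Longrightarrow> \<bar>g x\<bar> \<le> \<bar>B2\<bar>" using B2 by force
  have "(\<bar>B1\<bar> * L2 + \<bar>B2\<bar> * L1)-lipschitz_on U (\<lambda>x. f x * g x)"
  proof (rule lipschitz_onI)
    fix x y assume x: "x \<in> U" and y: "y \<in> U"
    have "dist (f x * g x) (f y * g y) = \<bar>f x * (g x - g y) + g y * (f x - f y)\<bar>"
      by (simp add: dist_real_def algebra_simps)
    also have "\<dots> \<le> \<bar>f x\<bar> * \<bar>g x - g y\<bar> + \<bar>g y\<bar> * \<bar>f x - f y\<bar>"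
      by (metis abs_mult abs_triangle_ineq)
    also have "\<dots> \<le> \<bar>B1\<bar> * (L2 * dist x y) + \<bar>B2\<bar> * (L1 * dist x y)"
    proof (rule add_mono)
      show "\<bar>f x\<bar> * \<bar>g x - g y\<bar> \<le> \<bar>B1\<bar> * (L2 * dist x y)"
        using B1'[OF x] lipschitz_onD[OF L2 x y] by (intro mult_mono) (auto simp: dist_real_def)
      show "\<bar>g y\<bar> * \<bar>f x - f y\<bar> \<le> \<bar>B2\<bar> * (L1 * dist x y)"
        using B2'[OF y] lipschitz_onD[OF L1 x y] by (intro mult_mono) (auto simp: dist_real_def)
    qed
    finally show "dist (f x * g x) (f y * g y) \<le> (\<bar>B1\<bar> * L2 + \<bar>B2\<bar> * L1) * dist x y"
      by (simp add: algebra_simps)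
  next
    show "0 \<le> \<bar>B1\<bar> * L2 + \<bar>B2\<bar> * L1"
      using lipschitz_on_nonneg[OF L1] lipschitz_on_nonneg[OF L2] by simp
  qed
  moreover have "\<forall>x\<in>U. \<bar>f x * g x\<bar> \<le> B1 * B2"
    using B1 B2 by (auto simp: abs_mult intro!: mult_mono order_trans[OF abs_ge_zero])
  ultimately show ?thesis unfolding blip_def by blast
qed


lemma blip_divc[intro!]: "blip U f \<Longrightarrow> blip U (\<lambda>x. f x / c)"
  using blip_mult[of U f "\<lambda>x. 1 / c"] by (simp add: blip_const)

lemma blip_comp[intro!]:
  assumes "bounded U"
  shows "blip U cS1" "blip U cS2" "blip U cN1" "blip U cN2" "blip U cN3"
proof -
  obtain B where B: "\<And>x. x \<in> U \<Longrightarrow> norm x \<le> B" using assms by (auto simp: bounded_iff)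
  have l: "1-lipschitz_on U c" "\<forall>x\<in>U. \<bar>c x\<bar> \<le> B"
    if "\<And>x. \<bar>c x\<bar> \<le> norm x" "\<And>x y. c (x - y) = c x - c y" for c
  proof -
    show "1-lipschitz_on U c"
      by (rule lipschitz_onI) (auto simp: dist_real_def dist_norm that(2)[symmetric] that(1))
    show "\<forall>x\<in>U. \<bar>c x\<bar> \<le> B" using B that(1) order_trans by blast
  qed
  show "blip U cS1" "blip U cS2" "blip U cN1" "blip U cN2" "blip U cN3"
    unfolding blip_def using l[of cS1] l[of cS2] l[of cN1] l[of cN2] l[of cN3] comp_le_norm
    by auto
qed

lemma blip_comp'[intro!]:
  assumes "bounded U"
  shows "blip U (\<lambda>x. cS1 x)" "blip U (\<lambda>x. cS2 x)" "blip U (\<lambda>x. cN1 x)" "blip U (\<lambda>x. cN2 x)"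
    "blip U (\<lambda>x. cN3 x)"
  using blip_comp[OF assms] by simp_all

lemma lip_Pair_ex:
  assumes "\<exists>L. L-lipschitz_on U f" "\<exists>M. M-lipschitz_on U g"
  shows "\<exists>K. K-lipschitz_on U (\<lambda>x. (f x, g x))"
  using assms lipschitz_on_Pair by blast

lemma blip_lip: "blip U f \<Longrightarrow> \<exists>L. L-lipschitz_on U f"
  unfolding blip_def by blast

lemma field_comp_blip:
  assumes "bounded U"
  shows "blip U (\<lambda>x. cS1 (wh_field x))" "blip U (\<lambda>x. cS2 (wh_field x))"
    "blip U (\<lambda>x. cN1 (wh_field x))" "blip U (\<lambda>x. cN2 (wh_field x))"
    "blip U (\<lambda>x. cN3 (wh_field x))"
  unfolding field_comps wq_def wh_Splus_def wh_Sminus_def power2_eq_square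
  using assms by (auto intro!: blip_comp')

lemma field_lip:
  assumes "bounded U"
  shows "\<exists>L. L-lipschitz_on U wh_field"
proof -
  have e: "wh_field = (\<lambda>x. (cS1 (wh_field x), cS2 (wh_field x), cN1 (wh_field x), cN2 (wh_field x), cN3 (wh_field x)))"
    by (rule ext) (rule state_eq)
  show ?thesis
    apply (subst e)
    using field_comp_blip[OF assms]
    by (intro lip_Pair_ex blip_lip)
qed



definition sol_on :: "real set \<Rightarrow> (real \<Rightarrow> wh_state) \<Rightarrow> bool" where
  "sol_on S \<phi> \<longleftrightarrow> (\<forall>t\<in>S. (\<phi> has_vector_derivative wh_field (\<phi> t)) (at t))"

lemma sol_on_subset: "sol_on S \<phi> \<Longrightarrow> T \<subseteq> S \<Longrightarrow> sol_on T \<phi>"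
  unfolding sol_on_def by blast

lemma sol_cont: "sol_on S \<phi> \<Longrightarrow> continuous_on S \<phi>"
  unfolding sol_on_def
  by (meson continuous_at_imp_continuous_on has_vector_derivative_continuous)

lemma gron_zero:
  fixes g g' :: "real \<Rightarrow> real"
  assumes t0: "t0 \<in> {a..b}"
    and d: "\<And>t. t \<in> {a..b} \<Longrightarrow> (g has_real_derivative g' t) (at t)"
    and K: "\<And>t. t \<in> {a..b} \<Longrightarrow> \<bar>g' t\<bar> \<le> K * g t"
    and nn: "\<And>t. g t \<ge> 0"
    and z: "g t0 = 0"
    and t: "t \<in> {a..b}"
  shows "g t = 0"
proof -
  have "g t \<le> 0"
  proof (cases "t0 \<le> t")
    case True
    have "g t \<le> g t0 * exp (K * (t - t0))"
      by (rule gronwall_up[OF True, where g'=g']) (use t0 t d K in \<open>auto simp: abs_le_iff\<close>)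
    then show ?thesis using z by simp
  next
    case False
    have "g t \<le> g t0 * exp (K * (t0 - t))"
    proof (rule gronwall_low[where g'=g'])
      fix s assume "s \<in> {t..t0}"
      then have s: "s \<in> {a..b}" using t0 t by auto
      show "(g has_real_derivative g' s) (at s)" by (rule d[OF s])
      show "- K * g s \<le> g' s" using K[OF s] by (simp add: abs_le_iff)
    qed (use False in auto)
    then show ?thesis using z by simp
  qed
  then show ?thesis using nn[of t] by simp
qed

lemma inner_sq_deriv:
  fixes d :: "real \<Rightarrow> 'a::real_inner"
  assumes "(d has_vector_derivative e) (at t)"
  shows "((\<lambda>s. inner (d s) (d s)) has_real_derivative 2 * inner (d t) e) (at t)"
  using assms
  unfolding has_real_derivative_iff_has_vector_derivative has_vector_derivative_def
  by (auto intro!: derivative_eq_intros simp: inner_commute algebra_simps)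

lemma sol_unique:
  assumes p: "sol_on {a..b} \<phi>" and q: "sol_on {a..b} \<psi>"
    and t0: "t0 \<in> {a..b}" and e: "\<phi> t0 = \<psi> t0" and t: "t \<in> {a..b}"
  shows "\<phi> t = \<psi> t"
proof -
  define U where "U = \<phi> ` {a..b} \<union> \<psi> ` {a..b}"
  have "compact U" unfolding U_def
    using sol_cont[OF p] sol_cont[OF q]
    by (intro compact_Un compact_continuous_image compact_Icc)
  then have "bounded U" by (rule compact_imp_bounded)
  then obtain L where L: "L-lipschitz_on U wh_field" using field_lip by blast
  define g where "g s = inner (\<phi> s - \<psi> s) (\<phi> s - \<psi> s)" for s
  define g' where "g' s = 2 * inner (\<phi> s - \<psi> s) (wh_field (\<phi> s) - wh_field (\<psi> s))" for s
  have d: "(g has_real_derivative g' s) (at s)" if "s \<in> {a..b}" for s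
    unfolding g_def g'_def
    using p q that unfolding sol_on_def
    by (intro inner_sq_deriv derivative_intros) auto
  have K: "\<bar>g' s\<bar> \<le> (2*L) * g s" if s: "s \<in> {a..b}" for s
  proof -
    have "\<bar>g' s\<bar> \<le> 2 * (norm (\<phi> s - \<psi> s) * norm (wh_field (\<phi> s) - wh_field (\<psi> s)))"
      unfolding g'_def using Cauchy_Schwarz_ineq2 by (simp add: abs_mult)
    also have "\<dots> \<le> 2 * (norm (\<phi> s - \<psi> s) * (L * norm (\<phi> s - \<psi> s)))"
      using lipschitz_onD[OF L, of "\<phi> s" "\<psi> s"] s
      by (intro mult_left_mono) (auto simp: U_def dist_norm)
    also have "\<dots> = (2*L) * g s" by (simp add: g_def power2_norm_eq_inner[symmetric] power2_eq_square)
    finally show ?thesis .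
  qed
  have "g t = 0"
    by (rule gron_zero[OF t0 d K _ _ t]) (auto simp: g_def e)
  then show ?thesis by (simp add: g_def)
qed



definition Bq :: "wh_state \<Rightarrow> real" where
  "Bq x = (cN1 x)\<^sup>2 + (cN2 x)\<^sup>2 + (cN3 x)\<^sup>2 - 2 * (cN1 x * cN2 x + cN2 x * cN3 x + cN1 x * cN3 x)"
definition Cf :: "wh_state \<Rightarrow> real" where
  "Cf x = (cS1 x)\<^sup>2 + (cS2 x)\<^sup>2 + 3/4 * Bq x - 1"
definition r1 :: "wh_state \<Rightarrow> real" where "r1 x = wq x - 4 * cS1 x"
definition r2 :: "wh_state \<Rightarrow> real" where "r2 x = wq x + 2 * cS1 x + 2 * sqrt 3 * cS2 x"
definition r3 :: "wh_state \<Rightarrow> real" where "r3 x = wq x + 2 * cS1 x - 2 * sqrt 3 * cS2 x"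

lemma constraint_Cf: "wh_constraint x \<longleftrightarrow> Cf x = 0"
proof -
  obtain a b c d e where x: "x = (a,b,c,d,e)" by (metis state_eq)
  show ?thesis unfolding x by (simp add: wh_constraint_def Cf_def Bq_def)
qed

lemma field_N: "cN1 (wh_field x) = r1 x * cN1 x" "cN2 (wh_field x) = r2 x * cN2 x"
  "cN3 (wh_field x) = r3 x * cN3 x"
  by (simp_all add: field_comps r1_def r2_def r3_def)

lemma Cf_poly: "2 * a * (-(2 - 2*(a^2+b^2))*a - 3*((1/2) * ((d-e)^2 - c*(2*c-d-e))))
  + 2 * b * (-(2 - 2*(a^2+b^2))*b - 3*((s / 2) * (e-d) * (c-d-e)))
  + 3/4 * (2*c*((2*(a^2+b^2) - 4*a)*c) + 2*d*((2*(a^2+b^2) + 2*a + 2 * s * b)*d) + 2*e*((2*(a^2+b^2) + 2*a - 2 * s * b)*e)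
     - 2 * ((2*(a^2+b^2) - 4*a)*c*d + c*((2*(a^2+b^2) + 2*a + 2 * s * b)*d) + (2*(a^2+b^2) + 2*a + 2 * s * b)*d*e
        + d*((2*(a^2+b^2) + 2*a - 2 * s * b)*e) + (2*(a^2+b^2) - 4*a)*c*e + c*((2*(a^2+b^2) + 2*a - 2 * s * b)*e)))
  = 2*(2*(a^2+b^2)) * (a^2+b^2 + 3/4*(c^2+d^2+e^2 - 2*(c*d+d*e+c*e)) - 1)"
  for a b c d e s :: real
  by (simp add: field_simps power2_eq_square)

lemma Cf_field:
  "2 * cS1 x * cS1 (wh_field x) + 2 * cS2 x * cS2 (wh_field x)
   + 3/4 * (2 * cN1 x * cN1 (wh_field x) + 2 * cN2 x * cN2 (wh_field x) + 2 * cN3 x * cN3 (wh_field x)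
     - 2 * (cN1 (wh_field x) * cN2 x + cN1 x * cN2 (wh_field x) + cN2 (wh_field x) * cN3 x
       + cN2 x * cN3 (wh_field x) + cN1 (wh_field x) * cN3 x + cN1 x * cN3 (wh_field x)))
   = 2 * wq x * Cf x"
  unfolding field_comps Cf_def Bq_def wq_def wh_Splus_def wh_Sminus_def
  by (rule Cf_poly)

lemma sol_deriv:
  assumes "sol_on S \<phi>" "t \<in> S"
  shows "((\<lambda>t. cS1 (\<phi> t)) has_real_derivative cS1 (wh_field (\<phi> t))) (at t)"
    "((\<lambda>t. cS2 (\<phi> t)) has_real_derivative cS2 (wh_field (\<phi> t))) (at t)"
    "((\<lambda>t. cN1 (\<phi> t)) has_real_derivative r1 (\<phi> t) * cN1 (\<phi> t)) (at t)"
    "((\<lambda>t. cN2 (\<phi> t)) has_real_derivative r2 (\<phi> t) * cN2 (\<phi> t)) (at t)"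
    "((\<lambda>t. cN3 (\<phi> t)) has_real_derivative r3 (\<phi> t) * cN3 (\<phi> t)) (at t)"
  using vd_comp[of \<phi> "wh_field (\<phi> t)" "at t"] assms unfolding sol_on_def field_N by auto

lemma Cf_deriv:
  assumes "sol_on S \<phi>" "t \<in> S"
  shows "((\<lambda>t. Cf (\<phi> t)) has_real_derivative (2 * wq (\<phi> t)) * Cf (\<phi> t)) (at t)"
proof -
  note d = vd_comp[of \<phi> "wh_field (\<phi> t)" "at t"]
  have dd: "(\<phi> has_vector_derivative wh_field (\<phi> t)) (at t)" using assms unfolding sol_on_def by auto
  show ?thesis
    unfolding Cf_def Bq_def
    apply (rule derivative_eq_intros d[OF dd] refl)+
    using Cf_field[of "\<phi> t"] by (simp add: power2_eq_square algebra_simps Cf_def Bq_def)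
qed

lemma cont_rates:
  assumes "continuous_on S \<phi>"
  shows "continuous_on S (\<lambda>t. r1 (\<phi> t))" "continuous_on S (\<lambda>t. r2 (\<phi> t))"
    "continuous_on S (\<lambda>t. r3 (\<phi> t))" "continuous_on S (\<lambda>t. 2 * wq (\<phi> t))"
  unfolding r1_def r2_def r3_def wq_def
  using cont_comp[OF assms] by (auto intro!: continuous_intros)

lemma sign_pres:
  fixes u c :: "real \<Rightarrow> real"
  assumes t0: "t0 \<in> {a..b}"
    and d: "\<And>t. t \<in> {a..b} \<Longrightarrow> (u has_real_derivative c t * u t) (at t)"
    and cc: "continuous_on {a..b} c"
    and t: "t \<in> {a..b}"
  shows "(u t0 = 0 \<longrightarrow> u t = 0) \<and> (u t0 \<noteq> 0 \<longrightarrow> u t * u t0 > 0)"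
proof -
  obtain K where K: "\<And>t. t \<in> {a..b} \<Longrightarrow> \<bar>c t\<bar> \<le> K" using cont_bounded_real[OF cc] by blast
  have cu: "continuous_on {a..b} u"
    using d by (meson DERIV_continuous continuous_at_imp_continuous_on)
  show ?thesis
  proof safe
    assume z: "u t0 = 0" show "u t = 0" using lin_zero[of t0 a b u c K t] t0 d K z t by blast
  next
    assume nz: "u t0 \<noteq> 0"
    have "\<And>s. s \<in> {a..b} \<Longrightarrow> u s \<noteq> 0" using lin_nonzero[of t0 a b u c K] t0 d K nz by blast
    then show "u t * u t0 > 0" by (rule nonzero_same_sign[OF cu _ t t0])
  qed
qed


lemma growth:
  fixes u c :: "real \<Rightarrow> real"
  assumes z: "0 \<in> {a..b}"
    and d: "\<And>t. t \<in> {a..b} \<Longrightarrow> (u has_real_derivative c t * u t) (at t)"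
    and K: "\<And>t. t \<in> {a..b} \<Longrightarrow> \<bar>c t\<bar> \<le> K"
    and t: "t \<in> {a..b}"
  shows "(u t)\<^sup>2 \<le> (u 0)\<^sup>2 * exp (2 * K * \<bar>t\<bar>)"
proof -
  define g where "g t = (u t)\<^sup>2" for t
  have dg: "(g has_real_derivative 2 * c s * g s) (at s)" if "s \<in> {a..b}" for s
    unfolding g_def by (rule lin_sq_deriv[OF d[OF that]])
  have gnn: "g s \<ge> 0" for s by (simp add: g_def)
  have up: "2 * c s * g s \<le> (2*K) * g s" if "s \<in> {a..b}" for s
    using K[OF that] gnn[of s] by (intro mult_right_mono) auto
  have low: "- (2*K) * g s \<le> 2 * c s * g s" if "s \<in> {a..b}" for s
    using K[OF that] gnn[of s] by (intro mult_right_mono) auto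
  show ?thesis
  proof (cases "0 \<le> t")
    case True
    have "g t \<le> g 0 * exp ((2*K) * (t - 0))"
    proof (rule gronwall_up[OF True, where g'="\<lambda>s. 2 * c s * g s"])
      fix s assume "s \<in> {0..t}"
      then have s: "s \<in> {a..b}" using z t by auto
      show "(g has_real_derivative 2 * c s * g s) (at s)" by (rule dg[OF s])
      show "2 * c s * g s \<le> 2 * K * g s" using up[OF s] by simp
    qed
    then show ?thesis using True by (simp add: g_def)
  next
    case False
    have "g t \<le> g 0 * exp ((2*K) * (0 - t))"
    proof (rule gronwall_low[where g'="\<lambda>s. 2 * c s * g s"])
      fix s assume "s \<in> {t..0}"
      then have s: "s \<in> {a..b}" using z t by auto
      show "(g has_real_derivative 2 * c s * g s) (at s)" by (rule dg[OF s])
      show "- (2 * K) * g s \<le> 2 * c s * g s" using low[OF s] by simp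
    qed (use False in auto)
    then show ?thesis using False by (simp add: g_def)
  qed
qed

lemma sign_lemma:
  fixes x y x0 y0 :: real
  assumes "x * x0 > 0" "y * y0 > 0" "x0 * y0 \<le> 0"
  shows "x * y \<le> 0"
proof -
  have "(x * y) * (x0 * y0) = (x * x0) * (y * y0)" by (simp add: algebra_simps)
  also have "\<dots> > 0" using assms by simp
  finally have pp: "(x * y) * (x0 * y0) > 0" .
  show ?thesis
  proof (rule ccontr)
    assume "\<not> x * y \<le> 0"
    then have "x * y > 0" by simp
    with pp have "x0 * y0 > 0" by (simp add: zero_less_mult_iff)
    then show False using assms(3) by simp
  qed
qed

lemma Bq_nonneg:
  assumes "cN3 x * cN1 x \<le> 0" "cN3 x * cN2 x \<le> 0"
  shows "Bq x \<ge> 0"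
proof -
  have "Bq x = (cN1 x - cN2 x)\<^sup>2 + (cN3 x)\<^sup>2 - 2 * (cN3 x * cN1 x) - 2 * (cN3 x * cN2 x)"
    unfolding Bq_def by (simp add: power2_eq_square algebra_simps)
  then show ?thesis using assms zero_le_power2[of "cN1 x - cN2 x"] zero_le_power2[of "cN3 x"] by linarith
qed

lemma rate_bounds:
  assumes "(cS1 x)\<^sup>2 + (cS2 x)\<^sup>2 \<le> 1"
  shows "\<bar>r1 x\<bar> \<le> 6" "\<bar>r2 x\<bar> \<le> 6" "\<bar>r3 x\<bar> \<le> 6"
proof -
  let ?a = "cS1 x" and ?b = "cS2 x"
  have a: "\<bar>?a\<bar> \<le> 1" using assms
    by (metis abs_square_le_1 le_add_same_cancel1 order_trans zero_le_power2)
  have w: "0 \<le> wq x" "wq x \<le> 2" using assms by (auto simp: wq_def)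
  have s3: "sqrt 3 * sqrt 3 = (3::real)" by simp
  have key: "\<bar>?a + sqrt 3 * ?b\<bar> \<le> 2" "\<bar>?a - sqrt 3 * ?b\<bar> \<le> 2"
  proof -
    have "(?a + sqrt 3 * ?b)\<^sup>2 = 4 * (?a\<^sup>2 + ?b\<^sup>2) - (sqrt 3 * ?a - ?b)\<^sup>2"
      by (simp add: power2_eq_square algebra_simps s3)
    also have "\<dots> \<le> 4" using assms by (smt (verit) zero_le_power2)
    finally have "(?a + sqrt 3 * ?b)\<^sup>2 \<le> 2\<^sup>2" by simp
    then have "\<bar>?a + sqrt 3 * ?b\<bar> \<le> \<bar>2\<bar>" by (simp only: abs_le_square_iff)
    then show "\<bar>?a + sqrt 3 * ?b\<bar> \<le> 2" by simp 
    have "(?a - sqrt 3 * ?b)\<^sup>2 = 4 * (?a\<^sup>2 + ?b\<^sup>2) - (sqrt 3 * ?a + ?b)\<^sup>2"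
      by (simp add: power2_eq_square algebra_simps s3)
    also have "\<dots> \<le> 4" using assms by (smt (verit) zero_le_power2)
    finally have "(?a - sqrt 3 * ?b)\<^sup>2 \<le> 2\<^sup>2" by simp
    then have "\<bar>?a - sqrt 3 * ?b\<bar> \<le> \<bar>2\<bar>" by (simp only: abs_le_square_iff)
    then show "\<bar>?a - sqrt 3 * ?b\<bar> \<le> 2" by simp
  qed
  show "\<bar>r1 x\<bar> \<le> 6" unfolding r1_def using a w by linarith
  show "\<bar>r2 x\<bar> \<le> 6" unfolding r2_def using key w by linarith
  show "\<bar>r3 x\<bar> \<le> 6" unfolding r3_def using key w by linarith
qed

lemma apriori_sign:
  assumes sol: "sol_on {a..b} \<phi>" and z: "0 \<in> {a..b}" and t: "t \<in> {a..b}"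
  shows "(cN1 (\<phi> 0) = 0 \<longrightarrow> cN1 (\<phi> t) = 0) \<and> (cN1 (\<phi> 0) \<noteq> 0 \<longrightarrow> cN1 (\<phi> t) * cN1 (\<phi> 0) > 0)"
    "(cN2 (\<phi> 0) = 0 \<longrightarrow> cN2 (\<phi> t) = 0) \<and> (cN2 (\<phi> 0) \<noteq> 0 \<longrightarrow> cN2 (\<phi> t) * cN2 (\<phi> 0) > 0)"
    "(cN3 (\<phi> 0) = 0 \<longrightarrow> cN3 (\<phi> t) = 0) \<and> (cN3 (\<phi> 0) \<noteq> 0 \<longrightarrow> cN3 (\<phi> t) * cN3 (\<phi> 0) > 0)"
  using sign_pres[OF z _ _ t, of "\<lambda>t. cN1 (\<phi> t)" "\<lambda>t. r1 (\<phi> t)"]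
    sign_pres[OF z _ _ t, of "\<lambda>t. cN2 (\<phi> t)" "\<lambda>t. r2 (\<phi> t)"]
    sign_pres[OF z _ _ t, of "\<lambda>t. cN3 (\<phi> t)" "\<lambda>t. r3 (\<phi> t)"]
    sol_deriv[OF sol] cont_rates[OF sol_cont[OF sol]]
  by auto

lemma prod_sign_pres:
  fixes x y x0 y0 :: real
  assumes "(x0 = 0 \<longrightarrow> x = 0) \<and> (x0 \<noteq> 0 \<longrightarrow> x * x0 > 0)"
    "(y0 = 0 \<longrightarrow> y = 0) \<and> (y0 \<noteq> 0 \<longrightarrow> y * y0 > 0)" "x0 * y0 \<le> 0"
  shows "x * y \<le> 0"
  using assms sign_lemma[of x x0 y y0] by (cases "x0 = 0"; cases "y0 = 0") auto

lemma apriori: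
  assumes sol: "sol_on {a..b} \<phi>" and z: "0 \<in> {a..b}" and c0: "Cf (\<phi> 0) = 0"
    and p1: "cN3 (\<phi> 0) * cN1 (\<phi> 0) \<le> 0" and p2: "cN3 (\<phi> 0) * cN2 (\<phi> 0) \<le> 0"
    and t: "t \<in> {a..b}"
  shows "Cf (\<phi> t) = 0" "cN3 (\<phi> t) * cN1 (\<phi> t) \<le> 0" "cN3 (\<phi> t) * cN2 (\<phi> t) \<le> 0"
    "(cS1 (\<phi> t))\<^sup>2 + (cS2 (\<phi> t))\<^sup>2 \<le> 1"
    "(cN1 (\<phi> t))\<^sup>2 \<le> (cN1 (\<phi> 0))\<^sup>2 * exp (12 * \<bar>t\<bar>)"
    "(cN2 (\<phi> t))\<^sup>2 \<le> (cN2 (\<phi> 0))\<^sup>2 * exp (12 * \<bar>t\<bar>)"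
    "(cN3 (\<phi> t))\<^sup>2 \<le> (cN3 (\<phi> 0))\<^sup>2 * exp (12 * \<bar>t\<bar>)"
proof -
  have Cz: "Cf (\<phi> s) = 0" if "s \<in> {a..b}" for s
    using sign_pres[OF z _ _ that, of "\<lambda>t. Cf (\<phi> t)" "\<lambda>t. 2 * wq (\<phi> t)"]
      Cf_deriv[OF sol] cont_rates(4)[OF sol_cont[OF sol]] c0 by auto
  have P1: "cN3 (\<phi> s) * cN1 (\<phi> s) \<le> 0" if "s \<in> {a..b}" for s
    using prod_sign_pres[OF apriori_sign(3)[OF sol z that] apriori_sign(1)[OF sol z that] p1] .
  have P2: "cN3 (\<phi> s) * cN2 (\<phi> s) \<le> 0" if "s \<in> {a..b}" for s
    using prod_sign_pres[OF apriori_sign(3)[OF sol z that] apriori_sign(2)[OF sol z that] p2] .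
  have S: "(cS1 (\<phi> s))\<^sup>2 + (cS2 (\<phi> s))\<^sup>2 \<le> 1" if "s \<in> {a..b}" for s
    using Cz[OF that] Bq_nonneg[OF P1[OF that] P2[OF that]] unfolding Cf_def by linarith
  show "Cf (\<phi> t) = 0" "cN3 (\<phi> t) * cN1 (\<phi> t) \<le> 0" "cN3 (\<phi> t) * cN2 (\<phi> t) \<le> 0"
    "(cS1 (\<phi> t))\<^sup>2 + (cS2 (\<phi> t))\<^sup>2 \<le> 1" using Cz P1 P2 S t by auto
  show "(cN1 (\<phi> t))\<^sup>2 \<le> (cN1 (\<phi> 0))\<^sup>2 * exp (12 * \<bar>t\<bar>)"
    using growth[OF z _ _ t, of "\<lambda>t. cN1 (\<phi> t)" "\<lambda>t. r1 (\<phi> t)" 6] sol_deriv[OF sol] rate_bounds[OF S]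
    by auto
  show "(cN2 (\<phi> t))\<^sup>2 \<le> (cN2 (\<phi> 0))\<^sup>2 * exp (12 * \<bar>t\<bar>)"
    using growth[OF z _ _ t, of "\<lambda>t. cN2 (\<phi> t)" "\<lambda>t. r2 (\<phi> t)" 6] sol_deriv[OF sol] rate_bounds[OF S]
    by auto
  show "(cN3 (\<phi> t))\<^sup>2 \<le> (cN3 (\<phi> 0))\<^sup>2 * exp (12 * \<bar>t\<bar>)"
    using growth[OF z _ _ t, of "\<lambda>t. cN3 (\<phi> t)" "\<lambda>t. r3 (\<phi> t)" 6] sol_deriv[OF sol] rate_bounds[OF S]
    by auto
qed



lemma int_exp_fwd:
  fixes g :: "real \<Rightarrow> 'a::euclidean_space"
  assumes "0 \<le> T" "continuous_on {0..T} g" "K > 0"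
    and b: "\<And>s. s \<in> {0..T} \<Longrightarrow> norm (g s) \<le> C * exp (2*K * s)"
  shows "norm (integral {0..T} g) \<le> C * (exp (2*K*T) - 1) / (2*K)"
proof -
  have fi: "((\<lambda>s. C * exp (2*K * s)) has_integral (C * exp (2*K*T) / (2*K) - C * exp (2*K*0) / (2*K))) {0..T}"
  proof (rule fundamental_theorem_of_calculus[OF assms(1)])
    fix s assume "s \<in> {0..T}"
    have "((\<lambda>s. C * exp (2*K * s) / (2*K)) has_real_derivative C * exp (2*K * s)) (at s)"
      using assms(3) by (auto intro!: derivative_eq_intros)
    then show "((\<lambda>s. C * exp (2*K * s) / (2*K)) has_vector_derivative C * exp (2*K * s)) (at s within {0..T})"
      by (simp add: has_real_derivative_iff_has_vector_derivative has_vector_derivative_at_within)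
  qed
  have "norm (integral {0..T} g) \<le> integral {0..T} (\<lambda>s. C * exp (2*K * s))"
    by (rule integral_norm_bound_integral)
      (use assms fi integrable_continuous_real in \<open>auto simp: has_integral_integrable\<close>)
  also have "\<dots> = C * (exp (2*K*T) - 1) / (2*K)"
    using integral_unique[OF fi] by (simp add: diff_divide_distrib right_diff_distrib)
  finally show ?thesis .
qed

lemma int_exp_bwd:
  fixes g :: "real \<Rightarrow> 'a::euclidean_space"
  assumes "T \<le> 0" "continuous_on {T..0} g" "K > 0"
    and b: "\<And>s. s \<in> {T..0} \<Longrightarrow> norm (g s) \<le> C * exp (-2*K * s)"
  shows "norm (integral {T..0} g) \<le> C * (exp (-2*K*T) - 1) / (2*K)"
proof -
  have fi: "((\<lambda>s. C * exp (-2*K * s)) has_integral ((- C * exp (-2*K*0) / (2*K)) - (- C * exp (-2*K*T) / (2*K)))) {T..0}"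
  proof (rule fundamental_theorem_of_calculus[OF assms(1)])
    fix s assume "s \<in> {T..0}"
    have "((\<lambda>s. - C * exp (-2*K * s) / (2*K)) has_real_derivative C * exp (-2*K * s)) (at s)"
      using assms(3) by (auto intro!: derivative_eq_intros)
    then show "((\<lambda>s. - C * exp (-2*K * s) / (2*K)) has_vector_derivative C * exp (-2*K * s)) (at s within {T..0})"
      by (simp add: has_real_derivative_iff_has_vector_derivative has_vector_derivative_at_within)
  qed
  have "norm (integral {T..0} g) \<le> integral {T..0} (\<lambda>s. C * exp (-2*K * s))"
    by (rule integral_norm_bound_integral)
      (use assms fi integrable_continuous_real in \<open>auto simp: has_integral_integrable\<close>)
  also have "\<dots> = C * (exp (-2*K*T) - 1) / (2*K)"
    using integral_unique[OF fi] by (simp add: diff_divide_distrib right_diff_distrib)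
  finally show ?thesis .
qed


lemma picard:
  fixes f :: "'a::euclidean_space \<Rightarrow> 'a"
  assumes lip: "L-lipschitz_on UNIV f" and bnd: "\<And>x. norm (f x) \<le> M" and A: "0 < A"
  shows "\<exists>x. x 0 = x0 \<and> (\<forall>t\<in>{-A<..<A}. (x has_vector_derivative f (x t)) (at t))"
proof -
  have L0: "0 \<le> L" using lipschitz_on_nonneg[OF lip] .
  define K where "K = L + 1"
  have K0: "K > 0" using L0 by (simp add: K_def)
  have LK: "L / K \<le> 1" using L0 K0 by (simp add: K_def)
  define w where "w s = exp (2*K*\<bar>s\<bar>)" for s
  have w0: "w s > 0" for s by (simp add: w_def)
  define cl where "cl t = max (-A) (min A t)" for t
  have cl_in: "cl t \<in> {-A..A}" for t using A by (auto simp: cl_def)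
  have cl_id: "t \<in> {-A..A} \<Longrightarrow> cl t = t" for t by (auto simp: cl_def)
  have cont_cl: "continuous_on UNIV cl" unfolding cl_def by (intro continuous_intros)
  have fc: "continuous_on UNIV f" using lipschitz_on_continuous_on[OF lip] .
  define h where "h u s = f (x0 + w s *\<^sub>R apply_bcontfun u s)" for u :: "real \<Rightarrow>\<^sub>C 'a" and s
  have hc: "continuous_on S (h u)" for u S
    unfolding h_def w_def by (intro continuous_on_compose2[OF fc] continuous_intros) auto
  have hi: "h u integrable_on {a..b}" for u a b by (rule integrable_continuous_real[OF hc])
  define I where "I u t = integral {-A..t} (h u) - integral {-A..0} (h u)" for u t
  define Pf where "Pf u t = (1 / w (cl t)) *\<^sub>R I u (cl t)" for u t
  have Ic: "continuous_on {-A..A} (I u)" for u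
    unfolding I_def by (intro continuous_intros indefinite_integral_continuous_1 hi)
  have Pc: "continuous_on UNIV (Pf u)" for u
  proof -
    have c1: "continuous_on UNIV (\<lambda>t. I u (cl t))"
      by (rule continuous_on_compose2[OF Ic cont_cl]) (use cl_in in auto)
    have c2: "continuous_on UNIV (\<lambda>t. 1 / w (cl t))"
      unfolding w_def cl_def by (intro continuous_intros) auto
    show ?thesis unfolding Pf_def by (intro continuous_intros c1 c2)
  qed
  have Ib: "norm (I u t) \<le> 3 * A * M" if t: "t \<in> {-A..A}" for u t
  proof -
    have M0: "0 \<le> M" using bnd[of 0] norm_ge_zero order_trans by blast
    have "norm (integral {-A..t} (h u)) \<le> M * (t - -A)"
      by (rule integral_bound) (use t hc in \<open>auto simp: h_def intro: bnd\<close>)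
    also have "\<dots> \<le> M * (2 * A)" using t M0 by (intro mult_left_mono) auto
    finally have 1: "norm (integral {-A..t} (h u)) \<le> M * (2 * A)" .
    have "norm (integral {-A..0} (h u)) \<le> M * (0 - -A)"
      by (rule integral_bound) (use A hc in \<open>auto simp: h_def intro: bnd\<close>)
    then have 2: "norm (integral {-A..0} (h u)) \<le> M * A" by simp
    have "norm (I u t) \<le> norm (integral {-A..t} (h u)) + norm (integral {-A..0} (h u))"
      unfolding I_def by (rule norm_triangle_ineq4)
    also have "\<dots> \<le> 3 * A * M" using 1 2 by (simp add: algebra_simps)
    finally show ?thesis .
  qed
  have Pb: "Pf u \<in> bcontfun" for u
  proof (rule bcontfun_normI[OF Pc])
    fix t
    have "norm (Pf u t) = (1 / w (cl t)) * norm (I u (cl t))"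
      unfolding Pf_def using w0[of "cl t"] by simp
    also have "\<dots> \<le> 1 * norm (I u (cl t))"
      using w0[of "cl t"] K0 by (intro mult_right_mono) (auto simp: w_def)
    also have "\<dots> \<le> 3 * A * M" using Ib[OF cl_in] by simp
    finally show "norm (Pf u t) \<le> 3 * A * M" .
  qed
  define P where "P u = Bcontfun (Pf u)" for u
  have Pa: "apply_bcontfun (P u) = Pf u" for u using Bcontfun_inverse[OF Pb] by (simp add: P_def)
  have contr: "dist (P u) (P v) \<le> 1/2 * dist u v" for u v
  proof (rule dist_bound)
    fix t
    define \<tau> where "\<tau> = cl t"
    define D where "D = dist u v"
    define g where "g s = h u s - h v s" for s
    have gc: "continuous_on S g" for S unfolding g_def by (intro continuous_intros hc)
    have gb: "norm (g s) \<le> (L * D) * w s" for s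
    proof -
      have "norm (g s) \<le> L * dist (x0 + w s *\<^sub>R apply_bcontfun u s) (x0 + w s *\<^sub>R apply_bcontfun v s)"
        using lipschitz_onD[OF lip] unfolding g_def h_def dist_norm[symmetric] by blast
      also have "\<dots> = L * (w s * dist (apply_bcontfun u s) (apply_bcontfun v s))"
        using w0[of s] by (simp add: dist_norm scaleR_diff_right[symmetric])
      also have "\<dots> \<le> L * (w s * D)"
        unfolding D_def using L0 w0[of s] dist_bounded by (intro mult_left_mono) auto
      finally show ?thesis by (simp add: algebra_simps)
    qed
    have D0: "0 \<le> D" by (simp add: D_def)
    have diff: "I u \<tau> - I v \<tau> = integral {-A..\<tau>} g - integral {-A..0} g"
      unfolding I_def g_def by (simp add: integral_diff hi)
    have "norm (I u \<tau> - I v \<tau>) \<le> (L * D) * w \<tau> / (2*K)"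
    proof (cases "0 \<le> \<tau>")
      case True
      have comb: "integral {-A..0} g + integral {0..\<tau>} g = integral {-A..\<tau>} g"
        using Henstock_Kurzweil_Integration.integral_combine[of "-A" 0 \<tau> g] True A integrable_continuous_real[OF gc] by auto
      have e: "I u \<tau> - I v \<tau> = integral {0..\<tau>} g" unfolding diff comb[symmetric] by simp
      have "norm (integral {0..\<tau>} g) \<le> (L * D) * (exp (2*K*\<tau>) - 1) / (2*K)"
      proof (rule int_exp_fwd[OF True gc K0])
        fix s assume "s \<in> {0..\<tau>}"
        then have "\<bar>s\<bar> = s" by auto
        then show "norm (g s) \<le> L * D * exp (2 * K * s)" using gb[of s] by (simp add: w_def)
      qed
      also have "\<dots> \<le> (L * D) * w \<tau> / (2*K)"
        using True L0 D0 K0 by (intro divide_right_mono mult_left_mono) (auto simp: w_def)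
      finally show ?thesis using e by simp
    next
      case False
      have comb: "integral {-A..\<tau>} g + integral {\<tau>..0} g = integral {-A..0} g"
        using Henstock_Kurzweil_Integration.integral_combine[of "-A" \<tau> 0 g] False cl_in[of t] integrable_continuous_real[OF gc] by (auto simp: \<tau>_def)
      have e: "I u \<tau> - I v \<tau> = - integral {\<tau>..0} g" unfolding diff comb[symmetric] by simp
      have "norm (integral {\<tau>..0} g) \<le> (L * D) * (exp (-2*K*\<tau>) - 1) / (2*K)"
      proof (rule int_exp_bwd[OF _ gc K0])
        fix s assume "s \<in> {\<tau>..0}"
        then have "\<bar>s\<bar> = - s" by auto
        then show "norm (g s) \<le> L * D * exp (- 2 * K * s)" using gb[of s] by (simp add: w_def)
      qed (use False in auto)
      also have "\<dots> \<le> (L * D) * w \<tau> / (2*K)"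
        using False L0 D0 K0 by (intro divide_right_mono mult_left_mono) (auto simp: w_def)
      finally show ?thesis using e by simp
    qed
    have "dist (apply_bcontfun (P u) t) (apply_bcontfun (P v) t) = (1 / w \<tau>) * norm (I u \<tau> - I v \<tau>)"
      unfolding Pa Pf_def \<tau>_def dist_norm using w0[of "cl t"] by (simp add: scaleR_diff_right[symmetric])
    also have "\<dots> \<le> (1 / w \<tau>) * ((L * D) * w \<tau> / (2*K))"
      using w0[of \<tau>] by (intro mult_left_mono \<open>norm (I u \<tau> - I v \<tau>) \<le> _\<close>) auto
    also have "\<dots> = (L / K) * D / 2" using w0[of \<tau>] K0 by (simp add: field_simps)
    also have "\<dots> \<le> 1 * D / 2" using LK D0 by (intro divide_right_mono mult_right_mono) auto
    finally show "dist (apply_bcontfun (P u) t) (apply_bcontfun (P v) t) \<le> 1 / 2 * dist u v"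
      by (simp add: D_def)
  qed
  obtain u where Pu: "P u = u"
    using banach_fix_type[of "1/2" P] contr by auto
  define x where "x t = x0 + w t *\<^sub>R apply_bcontfun u t" for t
  have hx: "h u s = f (x s)" for s by (simp add: h_def x_def)
  have xI: "x t = x0 + I u t" if "t \<in> {-A..A}" for t
  proof -
    have "apply_bcontfun u t = Pf u t" using Pa[of u] Pu by simp
    also have "\<dots> = (1 / w t) *\<^sub>R I u t" using cl_id[OF that] by (simp add: Pf_def)
    finally show ?thesis unfolding x_def using w0[of t] by simp
  qed
  have "x 0 = x0" using xI[of 0] A by (simp add: I_def)
  moreover have "(x has_vector_derivative f (x t)) (at t)" if t: "t \<in> {-A<..<A}" for t
  proof -
    have "((\<lambda>s. x0 + I u s) has_vector_derivative h u t) (at t within {-A..A})"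
      unfolding I_def using t
      by (auto intro!: derivative_eq_intros integral_has_vector_derivative hc)
    moreover have eq: "at t within {-A..A} = at t"
      by (rule at_within_interior) (use t in simp)
    ultimately have "((\<lambda>s. x0 + I u s) has_vector_derivative h u t) (at t)"
      by (simp only: eq)
    then have "((\<lambda>s. x0 + I u s) has_vector_derivative f (x t)) (at t)"
      unfolding hx[of t] .
    then show ?thesis
    proof (rule has_vector_derivative_transform_within_open[where S="{-A<..<A}"])
      fix y :: real assume "y \<in> {-A<..<A}"
      then have "y \<in> {-A..A}" by auto
      then show "x0 + I u y = x y" using xI by simp
    qed (use t in auto)
  qed
  ultimately show ?thesis by (intro exI[where x=x]) simp
qed



lemma first_exit:
  fixes g :: "real \<Rightarrow> real"
  assumes ab: "a \<le> b" and gc: "continuous_on {a..b} g" and ga: "g a < R"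
    and hyp: "\<And>c. c \<in> {a..b} \<Longrightarrow> (\<forall>s\<in>{a..c}. g s \<le> R) \<Longrightarrow> g c < R"
    and t: "t \<in> {a..b}"
  shows "g t < R"
proof (rule ccontr)
  assume "\<not> g t < R"
  then have gt: "R \<le> g t" by simp
  define Z where "Z = {a..t} \<inter> g -` {R}"
  have sub: "{a..t} \<subseteq> {a..b}" using t by auto
  have gc': "continuous_on {a..t} g" using continuous_on_subset[OF gc sub] .
  obtain z where z: "a \<le> z" "z \<le> t" "g z = R"
    using IVT'[of g a R t] ga gt gc' t by auto
  have Zne: "Z \<noteq> {}" using z by (auto simp: Z_def)
  have Zcl: "closed Z" unfolding Z_def by (rule continuous_closed_preimage[OF gc']) auto
  have Zbd: "bdd_below Z" unfolding Z_def by (auto intro: bdd_belowI[of _ a])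
  define c where "c = Inf Z"
  have cZ: "c \<in> Z" unfolding c_def by (rule closed_contains_Inf[OF Zne Zbd Zcl])
  then have c: "a \<le> c" "c \<le> t" "g c = R" by (auto simp: Z_def)
  have cmin: "c \<le> s" if "s \<in> Z" for s unfolding c_def by (rule cInf_lower[OF that Zbd])
  have "\<forall>s\<in>{a..c}. g s \<le> R"
  proof
    fix s assume s: "s \<in> {a..c}"
    show "g s \<le> R"
    proof (rule ccontr)
      assume "\<not> g s \<le> R"
      then have "R \<le> g s" by simp
      moreover have "continuous_on {a..s} g" using continuous_on_subset[OF gc'] s c by auto
      ultimately obtain z' where z': "a \<le> z'" "z' \<le> s" "g z' = R"
        using IVT'[of g a R s] ga s by auto
      then have "z' \<in> Z" using s c by (auto simp: Z_def)
      then have "c \<le> z'" by (rule cmin)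
      then have "z' = c" using z' s by auto
      then have "s = c" using z' s by auto
      then show False using \<open>\<not> g s \<le> R\<close> c by simp
    qed
  qed
  then have "g c < R" using hyp[of c] c t by auto
  then show False using c by simp
qed

definition pr :: "real \<Rightarrow> wh_state \<Rightarrow> wh_state" where
  "pr R x = closest_point (cball 0 R) x"

lemma pr_props:
  assumes "0 \<le> R"
  shows "pr R x \<in> cball 0 R" "x \<in> cball 0 R \<Longrightarrow> pr R x = x" "1-lipschitz_on UNIV (pr R)"
proof -
  have ne: "cball (0::wh_state) R \<noteq> {}" using assms by auto
  show "pr R x \<in> cball 0 R" unfolding pr_def by (rule closest_point_in_set[OF closed_cball ne])
  show "x \<in> cball 0 R \<Longrightarrow> pr R x = x" unfolding pr_def by (rule closest_point_self)
  show "1-lipschitz_on UNIV (pr R)"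
    by (rule lipschitz_onI) (auto simp: pr_def intro: closest_point_lipschitz[OF convex_cball closed_cball ne])
qed

lemma field_zero: "wh_field 0 = 0"
  by (simp add: wh_field_def zero_prod_def wh_Splus_def wh_Sminus_def wh_q_def)

lemma trunc_field:
  assumes "0 \<le> R"
  obtains L M where "L-lipschitz_on UNIV (\<lambda>x. wh_field (pr R x))" "\<And>x. norm (wh_field (pr R x)) \<le> M"
proof -
  obtain L where L: "L-lipschitz_on (cball 0 R) wh_field" using field_lip[of "cball 0 R"] by auto
  have L0: "0 \<le> L" using lipschitz_on_nonneg[OF L] .
  have "(L * 1)-lipschitz_on UNIV (\<lambda>x. wh_field (pr R x))"
    by (rule lipschitz_on_compose2[OF pr_props(3)[OF assms]])
      (rule lipschitz_on_subset[OF L], use pr_props(1)[OF assms] in auto)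
  moreover have "norm (wh_field (pr R x)) \<le> L * R" for x
  proof -
    have "norm (wh_field (pr R x)) = dist (wh_field (pr R x)) (wh_field 0)"
      by (simp add: field_zero dist_norm)
    also have "\<dots> \<le> L * dist (pr R x) 0"
      by (rule lipschitz_onD[OF L]) (use pr_props(1)[OF assms] assms in auto)
    also have "\<dots> \<le> L * R" using pr_props(1)[OF assms, of x] L0 by (intro mult_left_mono) auto
    finally show ?thesis .
  qed
  ultimately show ?thesis using that by blast
qed


definition good :: "wh_state \<Rightarrow> bool" where
  "good x \<longleftrightarrow> Cf x = 0 \<and> cN3 x * cN1 x \<le> 0 \<and> cN3 x * cN2 x \<le> 0"

definition Nsq :: "wh_state \<Rightarrow> real" where
  "Nsq x = (cN1 x)\<^sup>2 + (cN2 x)\<^sup>2 + (cN3 x)\<^sup>2"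

lemma good_S: "good x \<Longrightarrow> (cS1 x)\<^sup>2 + (cS2 x)\<^sup>2 \<le> 1"
  using Bq_nonneg[of x] unfolding good_def Cf_def by auto

lemma apriori_norm:
  assumes sol: "sol_on {a..b} \<phi>" and z: "0 \<in> {a..b}" and g: "good (\<phi> 0)" and t: "t \<in> {a..b}"
  shows "(norm (\<phi> t))\<^sup>2 \<le> 1 + Nsq (\<phi> 0) * exp (12 * \<bar>t\<bar>)"
  using apriori[OF sol z _ _ _ t] g unfolding good_def norm_sq_state Nsq_def
  by (simp add: algebra_simps)

lemma sqrt_bound:
  assumes "(norm (x::wh_state))\<^sup>2 \<le> B" shows "norm x \<le> sqrt B"
  using assms real_le_rsqrt by blast

lemma local_exist:
  assumes g: "good x0" and A: "A > 0"
  shows "\<exists>x. x 0 = x0 \<and> sol_on {-A<..<A} x"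
proof -
  define B where "B = sqrt (1 + Nsq x0 * exp (12 * A))"
  define R where "R = B + 1"
  have Nn: "0 \<le> Nsq x0" by (simp add: Nsq_def)
  have B0: "0 \<le> B" unfolding B_def using Nn by simp
  have R0: "0 \<le> R" using B0 by (simp add: R_def)
  obtain L M where L: "L-lipschitz_on UNIV (\<lambda>x. wh_field (pr R x))"
    and M: "\<And>x. norm (wh_field (pr R x)) \<le> M" using trunc_field[OF R0] by blast
  obtain x where x0: "x 0 = x0" and dx: "\<And>t. t \<in> {-A<..<A} \<Longrightarrow> (x has_vector_derivative wh_field (pr R (x t))) (at t)"
    using picard[OF L M A, of x0] by blast
  have xc: "continuous_on {-A<..<A} x"
    using dx by (meson continuous_at_imp_continuous_on has_vector_derivative_continuous)
  have bnd: "norm (x t) \<le> B" if "t \<in> {a..b}" "{a..b} \<subseteq> {-A<..<A}" "0 \<in> {a..b}"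
    and "\<forall>s\<in>{a..b}. norm (x s) \<le> R" for a b t
  proof -
    have sol: "sol_on {a..b} x" unfolding sol_on_def
    proof
      fix s assume s: "s \<in> {a..b}"
      have "wh_field (pr R (x s)) = wh_field (x s)"
        using pr_props(2)[OF R0, of "x s"] that(4) s by simp
      then show "(x has_vector_derivative wh_field (x s)) (at s)" using dx[of s] s that(2) by auto
    qed
    have "(norm (x t))\<^sup>2 \<le> 1 + Nsq x0 * exp (12 * \<bar>t\<bar>)"
      using apriori_norm[OF sol that(3) _ that(1)] g x0 by simp
    also have "\<dots> \<le> 1 + Nsq x0 * exp (12 * A)"
    proof -
      have "t \<in> {-A<..<A}" using that(1,2) by auto
      then have "\<bar>t\<bar> \<le> A" by auto
      then show ?thesis using Nn by (intro add_left_mono mult_left_mono) auto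
    qed
    finally show ?thesis unfolding B_def by (rule sqrt_bound)
  qed
  have nx0: "norm x0 < R"
  proof -
    have "(norm x0)\<^sup>2 \<le> 1 + Nsq x0 * exp (12 * A)"
    proof -
      have "(norm x0)\<^sup>2 \<le> 1 + Nsq x0" using good_S[OF g] unfolding norm_sq_state Nsq_def by simp
      also have "\<dots> \<le> 1 + Nsq x0 * exp (12 * A)" using Nn A by (simp add: mult_le_cancel_left1)
      finally show ?thesis .
    qed
    then have "norm x0 \<le> B" unfolding B_def by (rule sqrt_bound)
    then show ?thesis by (simp add: R_def)
  qed
  have inR: "norm (x t) < R" if t: "t \<in> {-A<..<A}" for t
  proof (cases "0 \<le> t")
    case True
    show ?thesis
    proof (rule first_exit[where g="\<lambda>s. norm (x s)" and a=0 and b=t])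
      show "continuous_on {0..t} (\<lambda>s. norm (x s))"
        proof -
        have sub: "{0..t} \<subseteq> {-A<..<A}" using t True A by auto
        show ?thesis using continuous_on_subset[OF xc sub] by (intro continuous_intros)
      qed
      show "norm (x 0) < R" using nx0 x0 by simp
      fix c assume c: "c \<in> {0..t}" and h: "\<forall>s\<in>{0..c}. norm (x s) \<le> R"
      have "norm (x c) \<le> B" by (rule bnd[OF _ _ _ h]) (use c t in auto)
      then show "norm (x c) < R" by (simp add: R_def)
    qed (use True in auto)
  next
    case False
    have "norm (x (- (- t))) < R"
    proof (rule first_exit[where g="\<lambda>s. norm (x (- s))" and a=0 and b="-t"])
      show "continuous_on {0..-t} (\<lambda>s. norm (x (- s)))"
        using t False A
        by (intro continuous_intros continuous_on_compose2[OF xc]) auto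
      show "norm (x (- 0)) < R" using nx0 x0 by simp
      fix c assume c: "c \<in> {0..-t}" and h: "\<forall>s\<in>{0..c}. norm (x (- s)) \<le> R"
      have h': "\<forall>s\<in>{-c..0}. norm (x s) \<le> R"
      proof
        fix s assume "s \<in> {-c..0}"
        then have "- s \<in> {0..c}" by auto
        then show "norm (x s) \<le> R" using h by fastforce
      qed
      have "norm (x (- c)) \<le> B" by (rule bnd[OF _ _ _ h']) (use c t in auto)
      then show "norm (x (- c)) < R" by (simp add: R_def)
    qed (use False in auto)
    then show ?thesis by simp
  qed
  have "sol_on {-A<..<A} x" unfolding sol_on_def
  proof
    fix t assume t: "t \<in> {-A<..<A}"
    have "wh_field (pr R (x t)) = wh_field (x t)"
      using pr_props(2)[OF R0, of "x t"] inR[OF t] by simp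
    then show "(x has_vector_derivative wh_field (x t)) (at t)" using dx[OF t] by simp
  qed
  then show ?thesis using x0 by blast
qed


lemma sol_agree:
  assumes "sol_on {-a<..<a} x" "sol_on {-b<..<b} y" "x 0 = y 0" "\<bar>s\<bar> < a" "\<bar>s\<bar> < b"
  shows "x s = y s"
proof -
  have "sol_on {-\<bar>s\<bar>..\<bar>s\<bar>} x" by (rule sol_on_subset[OF assms(1)]) (use assms in auto)
  moreover have "sol_on {-\<bar>s\<bar>..\<bar>s\<bar>} y" by (rule sol_on_subset[OF assms(2)]) (use assms in auto)
  moreover have "s \<in> {-\<bar>s\<bar>..\<bar>s\<bar>}" "0 \<in> {-\<bar>s\<bar>..\<bar>s\<bar>}" by auto
  ultimately show ?thesis using sol_unique[of "-\<bar>s\<bar>" "\<bar>s\<bar>" x y 0 s] assms(3) by blast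
qed

lemma global_exist:
  assumes g: "good x0"
  shows "\<exists>\<phi>. wh_solution \<phi> \<and> \<phi> 0 = x0"
proof -
  have "\<forall>n::nat. \<exists>x. x 0 = x0 \<and> sol_on {-(real n + 1)<..<real n + 1} x"
  proof
    fix n :: nat
    show "\<exists>x. x 0 = x0 \<and> sol_on {-(real n + 1)<..<real n + 1} x"
      using local_exist[OF g, of "real n + 1"] by simp
  qed
  then obtain X where X: "\<And>n. X n 0 = x0" "\<And>n. sol_on {-(real n + 1)<..<real n + 1} (X n)"
    by metis
  define k where "k t = nat \<lceil>\<bar>t\<bar>\<rceil>" for t :: real
  have kt: "\<bar>t\<bar> \<le> real (k t)" for t unfolding k_def by linarith
  define \<phi> where "\<phi> t = X (k t) t" for t
  have "(\<phi> has_vector_derivative wh_field (\<phi> t)) (at t)" for t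
  proof -
    let ?m = "k t"
    have d: "(X ?m has_vector_derivative wh_field (X ?m t)) (at t)"
    proof -
      have "t \<in> {-(real ?m + 1)<..<real ?m + 1}" using kt[of t] by (auto simp: abs_le_iff)
      then show ?thesis using X(2)[of ?m] unfolding sol_on_def by blast
    qed
    show ?thesis unfolding \<phi>_def
    proof (rule has_vector_derivative_transform_within_open[OF d, where S="{-(real ?m + 1)<..<real ?m + 1}"])
      fix y assume y: "y \<in> {-(real ?m + 1)<..<real ?m + 1}"
      show "X ?m y = X (k y) y"
        by (rule sol_agree[OF X(2) X(2)]) (use y kt[of y] X(1) in auto)
    qed (use kt[of t] in auto)
  qed
  moreover have "\<phi> 0 = x0" using X(1) by (simp add: \<phi>_def)
  ultimately show ?thesis unfolding wh_solution_def by blast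
qed

lemma wh_solution_sol_on: "wh_solution \<phi> \<Longrightarrow> sol_on S \<phi>"
  unfolding wh_solution_def sol_on_def by blast

lemma Phi_eq:
  assumes "wh_solution \<phi>"
  shows "Phi \<tau> (\<phi> 0) = \<phi> \<tau>"
proof -
  have "(THE \<psi>. wh_solution \<psi> \<and> \<psi> 0 = \<phi> 0) = \<phi>"
  proof (rule the_equality)
    show "wh_solution \<phi> \<and> \<phi> 0 = \<phi> 0" using assms by simp
    fix \<psi> assume h: "wh_solution \<psi> \<and> \<psi> 0 = \<phi> 0"
    show "\<psi> = \<phi>"
    proof
      fix t
      show "\<psi> t = \<phi> t"
      proof -
        have "t \<in> {-\<bar>t\<bar>..\<bar>t\<bar>}" "0 \<in> {-\<bar>t\<bar>..\<bar>t\<bar>}" by auto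
        then show ?thesis using sol_unique[of "-\<bar>t\<bar>" "\<bar>t\<bar>" \<psi> \<phi> 0 t] h wh_solution_sol_on[OF assms]
          wh_solution_sol_on[of \<psi>] by blast
      qed
    qed
  qed
  then show ?thesis unfolding Phi_def by simp
qed



definition Gfun :: "real \<Rightarrow> real" where
  "Gfun s = - ln ((1 + s) / (1 - s)) / 8 + 1 / (4 * (1 + s))"

lemma Gfun_deriv:
  assumes "-1 < s" "s < (1::real)"
  shows "(Gfun has_real_derivative - 1 / (2 * (1 - s) * (1 + s)\<^sup>2)) (at s)"
proof -
  have a: "1 - s > 0" "1 + s > 0" using assms by auto
  have "((\<lambda>s. ln ((1+s)/(1-s))) has_real_derivative inverse ((1+s)/(1-s)) * ((1 * (1-s) - (1+s) * (-1)) / (1-s)^2)) (at s)"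
    using a by (auto intro!: derivative_eq_intros simp: power2_eq_square simp del: divide_inverse) 
  moreover have "inverse ((1+s)/(1-s)) * ((1 * (1-s) - (1+s) * (-1)) / (1-s)^2) = 2/((1-s)*(1+s))"
  proof -
    define a where "a = 1 - s"
    define b where "b = 1 + s"
    have a: "a > 0" and b: "b > 0" and ab: "a + b = 2" using assms by (auto simp: a_def b_def)
    have "inverse ((1+s)/(1-s)) * ((1 * (1-s) - (1+s) * (-1)) / (1-s)^2) = inverse (b/a) * ((a + b)/a^2)"
      by (simp add: a_def b_def)
    also have "\<dots> = (a+b)/(a*b)" using a b by (simp add: field_simps power2_eq_square)
    also have "\<dots> = 2/(a*b)" using ab by simp
    finally show ?thesis by (simp add: a_def b_def)
  qed
  ultimately have d1: "((\<lambda>s. ln ((1+s)/(1-s))) has_real_derivative 2/((1-s)*(1+s))) (at s)" by simp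
  have d2: "((\<lambda>s. 1 / (4 * (1 + s))) has_real_derivative - (4 * 1) / (4 * (1 + s))^2) (at s)"
    using a by (auto intro!: derivative_eq_intros simp: power2_eq_square)
  have "(Gfun has_real_derivative (- (2/((1-s)*(1+s))))/8 + (- (4 * 1) / (4 * (1 + s))^2)) (at s)"
    unfolding Gfun_def by (intro DERIV_add DERIV_cdivide DERIV_minus d1 d2)
  moreover have "(- (2/((1-s)*(1+s))))/8 + (- (4 * 1) / (4 * (1 + s))^2) = - 1 / (2 * (1 - s) * (1 + s)\<^sup>2)"
  proof -
    define a where "a = 1 - s"
    define b where "b = 1 + s"
    have a: "a > 0" and b: "b > 0" and ab: "a + b = 2" using assms by (auto simp: a_def b_def)
    have "(- (2/(a*b)))/8 + (- (4 * 1) / (4 * b)^2) = - (b + a) / (4 * a * b\<^sup>2)"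
      using a b by (simp add: field_simps power2_eq_square)
    also have "\<dots> = - 1 / (2 * a * b\<^sup>2)" using ab a b by (simp add: field_simps power2_eq_square)
    finally show ?thesis by (simp add: a_def b_def)
  qed
  ultimately show ?thesis by simp
qed

lemma Gfun_deriv_neg: "-1 < s \<Longrightarrow> s < 1 \<Longrightarrow> - 1 / (2 * (1 - s) * (1 + s)\<^sup>2) < (0::real)"
  by (simp add: divide_neg_pos)

lemma Gfun_cont: "-1 < s \<Longrightarrow> s < 1 \<Longrightarrow> isCont Gfun s"
  using Gfun_deriv DERIV_isCont by blast

lemma Gfun_strict:
  assumes "-1 < a" "a < b" "b < 1"
  shows "Gfun b < Gfun a"
proof (rule DERIV_neg_imp_decreasing[OF assms(2)])
  fix x assume "a \<le> x" "x \<le> b"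
  then show "\<exists>y. DERIV Gfun x :> y \<and> y < 0"
    using Gfun_deriv Gfun_deriv_neg assms by (meson less_le_trans le_less_trans)
qed

lemma Gfun_0: "Gfun 0 = 1/4" by (simp add: Gfun_def)

definition sinv :: "real \<Rightarrow> real \<Rightarrow> real \<Rightarrow> real" where
  "sinv s1 s2 \<tau> = (THE s. s \<in> {s1..s2} \<and> Gfun s = \<tau>)"

lemma Gfun_inj:
  assumes "-1 < s1" "s2 < 1" "x \<in> {s1..s2}" "y \<in> {s1..s2}" "Gfun x = Gfun y"
  shows "x = y"
  using Gfun_strict[of x y] Gfun_strict[of y x] assms by (cases x y rule: linorder_cases) auto

lemma sinv_props:
  assumes s: "-1 < s1" "s1 \<le> s2" "s2 < 1" and t: "\<tau> \<in> {Gfun s2..Gfun s1}"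
  shows "sinv s1 s2 \<tau> \<in> {s1..s2} \<and> Gfun (sinv s1 s2 \<tau>) = \<tau>"
proof -
  have c: "continuous_on {s1..s2} Gfun"
    using Gfun_cont s by (intro continuous_at_imp_continuous_on) auto
  obtain x where x: "s1 \<le> x" "x \<le> s2" "Gfun x = \<tau>" using IVT2'[of Gfun s2 \<tau> s1, OF _ _ s(2) c] t by auto
  have "\<exists>!x. x \<in> {s1..s2} \<and> Gfun x = \<tau>"
    using x Gfun_inj[OF s(1) s(3)] by (intro ex1I[of _ x]) auto
  then show ?thesis unfolding sinv_def by (rule theI')
qed

lemma sinv_Gfun:
  assumes s: "-1 < s1" "s1 \<le> s2" "s2 < 1" and x: "x \<in> {s1..s2}"
  shows "sinv s1 s2 (Gfun x) = x"
proof -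
  have "Gfun x \<in> {Gfun s2..Gfun s1}"
    using x s Gfun_strict[of x s2] Gfun_strict[of s1 x] by (cases "x = s2"; cases "x = s1") auto
  then have "sinv s1 s2 (Gfun x) \<in> {s1..s2}" "Gfun (sinv s1 s2 (Gfun x)) = Gfun x"
    using sinv_props[OF s] by auto
  then show ?thesis using Gfun_inj[OF s(1) s(3) _ x] by blast
qed

lemma sinv_deriv:
  assumes s: "-1 < s1" "s1 < s2" "s2 < 1" and t: "\<tau> \<in> {Gfun s2<..<Gfun s1}"
  shows "(sinv s1 s2 has_real_derivative - 2 * (1 - sinv s1 s2 \<tau>) * (1 + sinv s1 s2 \<tau>)\<^sup>2) (at \<tau>)"
proof -
  let ?g = "sinv s1 s2"
  have st: "\<tau> \<in> {Gfun s2..Gfun s1}" using t by auto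
  have gi: "?g \<tau> \<in> {s1..s2}" "Gfun (?g \<tau>) = \<tau>" using sinv_props[OF _ _ _ st] s by auto
  have gn1: "?g \<tau> \<noteq> s1" using gi t by auto
  have gn2: "?g \<tau> \<noteq> s2" using gi t by auto
  have gin: "s1 < ?g \<tau>" "?g \<tau> < s2" using gi gn1 gn2 by auto
  have cont: "isCont ?g \<tau>"
  proof -
    have "isCont ?g (Gfun (?g \<tau>))"
      by (rule isCont_inverse_function2[OF gin]) (use s sinv_Gfun Gfun_cont in auto)
    then show ?thesis using gi by simp
  qed
  have "(?g has_real_derivative inverse (- 1 / (2 * (1 - ?g \<tau>) * (1 + ?g \<tau>)\<^sup>2))) (at \<tau>)"
  proof (rule DERIV_inverse_function[where f=Gfun and a="Gfun s2" and b="Gfun s1"])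
    show "(Gfun has_real_derivative - 1 / (2 * (1 - ?g \<tau>) * (1 + ?g \<tau>)\<^sup>2)) (at (?g \<tau>))"
      by (rule Gfun_deriv) (use gin s in auto)
    show "- 1 / (2 * (1 - ?g \<tau>) * (1 + ?g \<tau>)\<^sup>2) \<noteq> 0" using gin s by auto
    show "Gfun s2 < \<tau>" "\<tau> < Gfun s1" using t by auto
    show "\<And>y. Gfun s2 < y \<Longrightarrow> y < Gfun s1 \<Longrightarrow> Gfun (?g y) = y"
      using sinv_props[OF _ _ _] s by fastforce
    show "isCont ?g \<tau>" by (rule cont)
  qed
  then show ?thesis using gin s by (simp add: field_simps)
qed


definition nf :: "real \<Rightarrow> real" where "nf s = sqrt ((1 - s\<^sup>2) / 3)"

lemma nf_sq: "-1 < s \<Longrightarrow> s < 1 \<Longrightarrow> 3 * (nf s)\<^sup>2 = 1 - s\<^sup>2"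
  unfolding nf_def by (simp add: abs_square_less_1 less_imp_le)

lemma nf_pos: "-1 < s \<Longrightarrow> s < 1 \<Longrightarrow> nf s > 0"
  unfolding nf_def by (simp add: abs_square_less_1)

lemma field_psi:
  assumes "3 * n\<^sup>2 = 1 - s\<^sup>2"
  shows "wh_field (s, 0, 0, n, - n) = (- 2 * (1 - s) * (1 + s)\<^sup>2, 0, 0, (2 * s\<^sup>2 + 2 * s) * n, - ((2 * s\<^sup>2 + 2 * s) * n))"
proof -
  have "-(2 - 2 * s\<^sup>2) * s - 3 * (1/2 * ((n - - n)\<^sup>2 - 0 * (2 * 0 - n - - n))) = - 2 * (1 - s) * (1 + s)\<^sup>2"
  proof -
    have "-(2 - 2 * s\<^sup>2) * s - 3 * (1/2 * ((n - - n)\<^sup>2 - 0 * (2 * 0 - n - - n))) = -(2 - 2 * s\<^sup>2) * s - 2 * (3 * n\<^sup>2)"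
      by (simp add: power2_eq_square algebra_simps)
    also have "\<dots> = - 2 * (1 - s) * (1 + s)\<^sup>2" unfolding assms by (simp add: power2_eq_square algebra_simps)
    finally show ?thesis .
  qed
  then show ?thesis
    by (simp add: wh_field_def wh_q_def wh_Splus_def wh_Sminus_def Let_def algebra_simps)
qed

definition psi :: "real \<Rightarrow> real \<Rightarrow> real \<Rightarrow> wh_state" where
  "psi s1 s2 t = (sinv s1 s2 (t + 1/4), 0, 0, nf (sinv s1 s2 (t + 1/4)), - nf (sinv s1 s2 (t + 1/4)))"

lemma psi_sol:
  assumes s: "-1 < s1" "s1 < s2" "s2 < 1"
  shows "sol_on {Gfun s2 - 1/4<..<Gfun s1 - 1/4} (psi s1 s2)"
  unfolding sol_on_def
proof
  fix t assume t: "t \<in> {Gfun s2 - 1/4<..<Gfun s1 - 1/4}"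
  define \<sigma> where "\<sigma> = sinv s1 s2 (t + 1/4)"
  have tau: "t + 1/4 \<in> {Gfun s2<..<Gfun s1}" using t by auto
  have tau': "t + 1/4 \<in> {Gfun s2..Gfun s1}" using t by auto
  have sr: "\<sigma> \<in> {s1..s2}" using sinv_props[OF s(1) _ s(3) tau'] s(2) by (simp add: \<sigma>_def)
  have sig: "-1 < \<sigma>" "\<sigma> < 1" using sr s by auto
  have ds: "((\<lambda>t. sinv s1 s2 (t + 1/4)) has_real_derivative - 2 * (1 - \<sigma>) * (1 + \<sigma>)\<^sup>2) (at t)"
  proof -
    have d0: "(sinv s1 s2 has_real_derivative - 2 * (1 - \<sigma>) * (1 + \<sigma>)\<^sup>2) (at ((\<lambda>t. t + 1/4) t))"
      using sinv_deriv[OF s tau] unfolding \<sigma>_def by simp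
    have d1: "((\<lambda>t. t + 1/4) has_real_derivative 1) (at t)" by (auto intro!: derivative_eq_intros)
    show ?thesis using DERIV_chain2[where g="\<lambda>t. t + 1/4" and x=t, OF d0 d1] by simp
  qed
  have npos: "nf \<sigma> > 0" by (rule nf_pos[OF sig])
  have nsq: "3 * (nf \<sigma>)\<^sup>2 = 1 - \<sigma>\<^sup>2" by (rule nf_sq[OF sig])
  have arg: "(1 - \<sigma>\<^sup>2) / 3 > 0" using sig by (simp add: abs_square_less_1)
  have dn: "((\<lambda>t. nf (sinv s1 s2 (t + 1/4))) has_real_derivative (2 * \<sigma>\<^sup>2 + 2 * \<sigma>) * nf \<sigma>) (at t)"
  proof -
    have "((\<lambda>t. sqrt ((1 - (sinv s1 s2 (t + 1/4))\<^sup>2) / 3)) has_real_derivative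
        inverse (sqrt ((1 - \<sigma>\<^sup>2) / 3)) / 2 * ((0 - 2 * \<sigma> * (- 2 * (1 - \<sigma>) * (1 + \<sigma>)\<^sup>2)) / 3)) (at t)"
      using arg unfolding \<sigma>_def
      by (auto intro!: derivative_eq_intros ds[unfolded \<sigma>_def] simp: power2_eq_square)
    moreover have "inverse (sqrt ((1 - \<sigma>\<^sup>2) / 3)) / 2 * ((0 - 2 * \<sigma> * (- 2 * (1 - \<sigma>) * (1 + \<sigma>)\<^sup>2)) / 3)
        = (2 * \<sigma>\<^sup>2 + 2 * \<sigma>) * nf \<sigma>"
    proof -
      have "inverse (sqrt ((1 - \<sigma>\<^sup>2) / 3)) / 2 * ((0 - 2 * \<sigma> * (- 2 * (1 - \<sigma>) * (1 + \<sigma>)\<^sup>2)) / 3)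
          = (2 * \<sigma> * (1 - \<sigma>) * (1 + \<sigma>)\<^sup>2) / (3 * nf \<sigma>)"
        using npos unfolding nf_def[symmetric] by (simp add: field_simps)
      also have "\<dots> = (2 * \<sigma> * (1 + \<sigma>)) * (1 - \<sigma>\<^sup>2) / (3 * nf \<sigma>)"
        by (simp add: power2_eq_square algebra_simps)
      also have "\<dots> = (2 * \<sigma> * (1 + \<sigma>)) * (3 * (nf \<sigma>)\<^sup>2) / (3 * nf \<sigma>)"
        by (simp only: nsq)
      also have "\<dots> = (2 * \<sigma>\<^sup>2 + 2 * \<sigma>) * nf \<sigma>"
        using npos by (simp add: power2_eq_square field_simps)
      finally show ?thesis .
    qed
    ultimately show ?thesis unfolding nf_def by simp
  qed
  have "(psi s1 s2 has_vector_derivative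
      (- 2 * (1 - \<sigma>) * (1 + \<sigma>)\<^sup>2, 0, 0, (2 * \<sigma>\<^sup>2 + 2 * \<sigma>) * nf \<sigma>, - ((2 * \<sigma>\<^sup>2 + 2 * \<sigma>) * nf \<sigma>))) (at t)"
    unfolding psi_def
    using ds dn unfolding has_real_derivative_iff_has_vector_derivative
    by (intro has_vector_derivative_Pair derivative_intros) auto
  moreover have "psi s1 s2 t = (\<sigma>, 0, 0, nf \<sigma>, - nf \<sigma>)" by (simp add: psi_def \<sigma>_def)
  ultimately show "(psi s1 s2 has_vector_derivative wh_field (psi s1 s2 t)) (at t)"
    using field_psi[OF nsq] by simp
qed



lemma compare:
  assumes p: "sol_on {0..T} \<phi>" and q: "sol_on {0..T} \<psi>" and T: "0 \<le> T"
    and L: "L-lipschitz_on (cball 0 R) wh_field"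
    and inb: "\<And>t. t \<in> {0..T} \<Longrightarrow> \<phi> t \<in> cball 0 R \<and> \<psi> t \<in> cball 0 R"
  shows "norm (\<phi> T - \<psi> T) \<le> norm (\<phi> 0 - \<psi> 0) * exp (L * T)"
proof -
  define g where "g s = inner (\<phi> s - \<psi> s) (\<phi> s - \<psi> s)" for s
  define g' where "g' s = 2 * inner (\<phi> s - \<psi> s) (wh_field (\<phi> s) - wh_field (\<psi> s))" for s
  have d: "(g has_real_derivative g' s) (at s)" if "s \<in> {0..T}" for s
    unfolding g_def g'_def
    using p q that unfolding sol_on_def
    by (intro inner_sq_deriv derivative_intros) auto
  have K: "g' s \<le> (2*L) * g s" if s: "s \<in> {0..T}" for s
  proof -
    have "g' s \<le> 2 * (norm (\<phi> s - \<psi> s) * norm (wh_field (\<phi> s) - wh_field (\<psi> s)))"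
      unfolding g'_def using Cauchy_Schwarz_ineq2[of "\<phi> s - \<psi> s"] by (simp add: abs_le_iff)
    also have "\<dots> \<le> 2 * (norm (\<phi> s - \<psi> s) * (L * norm (\<phi> s - \<psi> s)))"
      using lipschitz_onD[OF L, of "\<phi> s" "\<psi> s"] inb[OF s]
      by (intro mult_left_mono) (auto simp: dist_norm)
    also have "\<dots> = (2*L) * g s" by (simp add: g_def power2_norm_eq_inner[symmetric] power2_eq_square)
    finally show ?thesis .
  qed
  have "g T \<le> g 0 * exp ((2*L) * (T - 0))"
    by (rule gronwall_up[OF T, where g'=g']) (use d K in auto)
  then have "(norm (\<phi> T - \<psi> T))\<^sup>2 \<le> (norm (\<phi> 0 - \<psi> 0) * exp (L * T))\<^sup>2"
    by (simp add: g_def power2_norm_eq_inner[symmetric] power_mult_distrib exp_double[symmetric]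
        power2_eq_square[of "exp _"] mult_exp_exp algebra_simps)
  then show ?thesis by (rule power2_le_imp_le) simp
qed

lemma shift_solution:
  assumes "wh_solution \<phi>"
  shows "wh_solution (\<lambda>t. \<phi> (t + T))"
  unfolding wh_solution_def
proof
  fix t
  have d1: "((\<lambda>t. t + T) has_vector_derivative 1) (at t)"
    by (auto intro!: derivative_eq_intros simp: has_real_derivative_iff_has_vector_derivative[symmetric])
  have d2: "(\<phi> has_vector_derivative wh_field (\<phi> (t + T))) (at ((\<lambda>t. t + T) t))"
    using assms unfolding wh_solution_def by simp
  show "((\<lambda>t. \<phi> (t + T)) has_vector_derivative wh_field (\<phi> (t + T))) (at t)"
    using vector_diff_chain_at[OF d1 d2] by (simp add: o_def)
qed


lemma VIII_from_signs:
  assumes "c > 0" "d > 0" "e < 0"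
  shows "bianchi_VIII (a, b, c, d, e)"
  using assms by (simp add: bianchi_VIII_def)

theorem mainTheorem6:
  fixes \<epsilon> :: real
  assumes "\<epsilon> > 0"
  shows "\<exists>(y :: wh_state) (T :: real).
           bianchi_VIII y \<and> wh_constraint y \<and> infdist y kasner_circle < \<epsilon> \<and> T > 0 \<and>
           (case Phi (-T) y of (sp, sm, n1, n2, n3) \<Rightarrow>
              bianchi_VIII (sp, sm, n1, n2, n3) \<and>
              \<bar>n1 * n2\<bar> + \<bar>n2 * n3\<bar> + \<bar>n3 * n1\<bar> \<ge> 1/4)"
proof -
  define \<eta> where "\<eta> = min (1/2) (\<epsilon>\<^sup>2 / 12)"
  have \<eta>: "0 < \<eta>" "\<eta> \<le> 1/2" "\<eta> \<le> \<epsilon>\<^sup>2 / 12" using assms by (auto simp: \<eta>_def)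
  define \<sigma> where "\<sigma> = -1 + \<eta>"
  define s1 where "s1 = -1 + \<eta> / 2"
  define s2 :: real where "s2 = 1/2"
  have s: "-1 < s1" "s1 < s2" "s2 < 1" "s1 < \<sigma>" "\<sigma> < 0" "-1 < \<sigma>" "s1 < 0"
    using \<eta> by (auto simp: s1_def s2_def \<sigma>_def)
  define T where "T = Gfun \<sigma> - 1/4"
  have GT: "Gfun 0 < Gfun \<sigma>" by (rule Gfun_strict) (use s in auto)
  have T0: "0 < T" using GT by (simp add: T_def Gfun_0)
  have Gs2: "Gfun s2 < Gfun 0" by (rule Gfun_strict) (use s in \<open>auto simp: s2_def\<close>)
  have Gs1: "Gfun \<sigma> < Gfun s1" by (rule Gfun_strict) (use s in auto)
  define \<psi> where "\<psi> = psi s1 s2"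
  have psol: "sol_on {0..T} \<psi>"
    unfolding \<psi>_def
    by (rule sol_on_subset[OF psi_sol[OF s(1-3)]]) (use Gs2 Gs1 in \<open>auto simp: T_def Gfun_0\<close>)
  have sinv_rng: "sinv s1 s2 (t + 1/4) \<in> {s1..s2}" if "t \<in> {0..T}" for t
  proof -
    have "t + 1/4 \<in> {Gfun s2..Gfun s1}" using that Gs2 Gs1 by (auto simp: T_def Gfun_0)
    then show ?thesis using sinv_props[of s1 s2] s by auto
  qed
  define r where "r = nf 0"
  have r2: "r\<^sup>2 = 1/3" using nf_sq[of 0] by (simp add: r_def)
  have rpos: "r > 0" using nf_pos[of 0] by (simp add: r_def)
  have rhalf: "r > 1/2"
  proof (rule ccontr)
    assume "\<not> r > 1/2"
    then have "r\<^sup>2 \<le> (1/2)\<^sup>2" using rpos by (intro power_mono) auto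
    then show False using r2 by (simp add: power_divide)
  qed
  have r1: "r < 1"
  proof (rule ccontr)
    assume "\<not> r < 1"
    then have "1\<^sup>2 \<le> r\<^sup>2" by (intro power_mono) auto
    then show False using r2 by simp
  qed
  have \<psi>0: "\<psi> 0 = (0, 0, 0, r, - r)"
  proof -
    have "sinv s1 s2 (0 + 1/4) = 0" using sinv_Gfun[of s1 s2 0] s by (simp add: Gfun_0 s2_def)
    then show ?thesis by (simp add: \<psi>_def psi_def r_def)
  qed
  have \<psi>T: "\<psi> T = (\<sigma>, 0, 0, nf \<sigma>, - nf \<sigma>)"
  proof -
    have "sinv s1 s2 (T + 1/4) = \<sigma>" using sinv_Gfun[of s1 s2 \<sigma>] s by (simp add: T_def s2_def)
    then show ?thesis by (simp add: \<psi>_def psi_def)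
  qed
  define R where "R = sqrt (1 + 2 * exp (12 * T))"
  obtain L where L: "L-lipschitz_on (cball 0 R) wh_field" using field_lip[of "cball 0 R"] by auto
  have L0: "0 \<le> L" using lipschitz_on_nonneg[OF L] .
  define E where "E = exp (L * T)"
  have E0: "E > 0" by (simp add: E_def)
  define \<delta> where "\<delta> = min (1/2) (\<epsilon> / (8 * E))"
  have \<delta>: "0 < \<delta>" "\<delta> \<le> 1/2" "\<delta> \<le> \<epsilon> / (8 * E)" using assms E0 by (auto simp: \<delta>_def)
  have \<delta>E: "2 * \<delta> * E \<le> \<epsilon> / 4"
  proof -
    have "2 * \<delta> * E \<le> 2 * (\<epsilon> / (8 * E)) * E" using \<delta> E0 by (intro mult_right_mono mult_left_mono) auto
    also have "\<dots> = \<epsilon> / 4" using E0 by (simp add: field_simps)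
    finally show ?thesis .
  qed
  define x0 :: wh_state where "x0 = (0, 0, \<delta>, r + \<delta>/4, - (r - \<delta>/4))"
  have rd: "r - \<delta>/4 > 0" using rhalf \<delta> by simp
  have dd: "\<delta>\<^sup>2 \<le> 1/4"
  proof -
    have "\<delta>\<^sup>2 \<le> (1/2)\<^sup>2" using \<delta> by (intro power_mono) auto
    then show ?thesis by (simp add: power_divide)
  qed
  have gx0: "good x0"
  proof -
    have "Cf x0 = 3/4 * (4 * r\<^sup>2) - 1"
      by (simp add: x0_def Cf_def Bq_def power2_eq_square algebra_simps)
    also have "\<dots> = 0" using r2 by simp
    moreover have "(\<delta> / 4 - r) * \<delta> \<le> 0" using rd \<delta> by (intro mult_nonpos_nonneg) auto
    moreover have "(\<delta> / 4 - r) * (r + \<delta> / 4) \<le> 0" using rd \<delta> rpos by (intro mult_nonpos_nonneg) auto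
    ultimately show ?thesis unfolding good_def x0_def by simp
  qed
  obtain \<phi> where \<phi>: "wh_solution \<phi>" "\<phi> 0 = x0" using global_exist[OF gx0] by blast
  have fsol: "sol_on {0..T} \<phi>" by (rule wh_solution_sol_on[OF \<phi>(1)])
  have z0: "0 \<in> {0..T}" using T0 by simp
  have Nx0: "Nsq x0 \<le> 2"
  proof -
    have "Nsq x0 = \<delta>\<^sup>2 + 2 * r\<^sup>2 + \<delta>\<^sup>2 / 8"
      by (simp add: x0_def Nsq_def power2_eq_square algebra_simps)
    also have "\<dots> \<le> 2" using r2 dd by linarith
    finally show ?thesis .
  qed
  have inb: "\<phi> t \<in> cball 0 R \<and> \<psi> t \<in> cball 0 R" if t: "t \<in> {0..T}" for t
  proof
    have "(norm (\<phi> t))\<^sup>2 \<le> 1 + Nsq (\<phi> 0) * exp (12 * \<bar>t\<bar>)"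
      by (rule apriori_norm[OF fsol z0 _ t]) (use gx0 \<phi> in simp)
    also have "\<dots> \<le> 1 + 2 * exp (12 * T)"
      using Nx0 t \<phi>(2) by (intro add_left_mono mult_mono) (auto simp: Nsq_def)
    finally show "\<phi> t \<in> cball 0 R" unfolding R_def by (auto intro: sqrt_bound)
    define u where "u = sinv s1 s2 (t + 1/4)"
    have u: "-1 < u" "u < 1" using sinv_rng[OF t] s by (auto simp: u_def)
    have "(norm (\<psi> t))\<^sup>2 = u\<^sup>2 + 2 * (nf u)\<^sup>2"
      unfolding norm_sq_state by (simp add: \<psi>_def psi_def u_def)
    also have "\<dots> \<le> 1 + 2 * exp (12 * T)"
    proof -
      have "u\<^sup>2 + 2 * (nf u)\<^sup>2 = u\<^sup>2 + 2 * ((1 - u\<^sup>2) / 3)" using nf_sq[OF u] by simp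
      also have "\<dots> \<le> 1 + 2 * 1"
      proof -
        have "u\<^sup>2 \<le> 1" using u by (simp add: abs_square_le_1)
        then show ?thesis by (simp add: field_simps)
      qed
      also have "\<dots> \<le> 1 + 2 * exp (12 * T)" using T0 by simp
      finally show ?thesis .
    qed
    finally show "\<psi> t \<in> cball 0 R" unfolding R_def by (auto intro: sqrt_bound)
  qed
  have cmp: "norm (\<phi> T - \<psi> T) \<le> norm (\<phi> 0 - \<psi> 0) * E"
    unfolding E_def by (rule compare[OF fsol psol _ L inb]) (use T0 in auto)
  have d0: "norm (\<phi> 0 - \<psi> 0) \<le> 2 * \<delta>"
  proof -
    have "(norm (\<phi> 0 - \<psi> 0))\<^sup>2 = \<delta>\<^sup>2 + (\<delta>/4)\<^sup>2 + (\<delta>/4)\<^sup>2"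
      unfolding norm_sq_state by (simp add: \<phi>(2) \<psi>0 x0_def)
    also have "\<dots> \<le> (2 * \<delta>)\<^sup>2" by (simp add: power2_eq_square)
    finally show ?thesis by (rule power2_le_imp_le) (use \<delta> in simp)
  qed
  have part1: "norm (\<phi> T - \<psi> T) \<le> \<epsilon> / 4"
  proof -
    have "norm (\<phi> 0 - \<psi> 0) * E \<le> 2 * \<delta> * E" using mult_right_mono[OF d0, of E] E0 by simp
    then have "norm (\<phi> T - \<psi> T) \<le> 2 * \<delta> * E" using cmp by linarith
    then show ?thesis using \<delta>E by simp
  qed
  define k0 :: wh_state where "k0 = (-1, 0, 0, 0, 0)"
  have k0K: "k0 \<in> kasner_circle" by (simp add: k0_def kasner_circle_def)
  have part2: "norm (\<psi> T - k0) \<le> \<epsilon> / 2"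
  proof -
    have "(norm (\<psi> T - k0))\<^sup>2 = \<eta>\<^sup>2 + 2 * (nf \<sigma>)\<^sup>2"
      unfolding norm_sq_state by (simp add: \<psi>T k0_def \<sigma>_def)
    also have "\<dots> = \<eta>\<^sup>2 + 2 * ((1 - \<sigma>\<^sup>2) / 3)" using nf_sq[of \<sigma>] s by simp
    also have "\<dots> = \<eta>\<^sup>2 + 2 * ((2 - \<eta>) * \<eta> / 3)" by (simp add: \<sigma>_def power2_eq_square algebra_simps)
    also have "\<dots> \<le> 2 * \<eta>"
    proof -
      have e1: "2 * ((2 - \<eta>) * \<eta> / 3) = 4/3 * \<eta> - 2/3 * \<eta>\<^sup>2" by (simp add: field_simps power2_eq_square)
      have e2: "\<eta>\<^sup>2 \<le> \<eta> / 2"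
      proof -
        have "\<eta> * \<eta> \<le> \<eta> * (1/2)" using \<eta> by (intro mult_left_mono) auto
        then show ?thesis by (simp add: power2_eq_square)
      qed
      have e3: "\<eta>\<^sup>2 \<ge> 0" by simp
      show ?thesis unfolding e1 using e2 e3 \<eta> by linarith
    qed
    also have "\<dots> \<le> (\<epsilon> / 2)\<^sup>2" using \<eta> by (simp add: power2_eq_square)
    finally show ?thesis by (rule power2_le_imp_le) (use assms in simp)
  qed
  define y where "y = \<phi> T"
  have "infdist y kasner_circle \<le> dist y k0" by (rule infdist_le[OF k0K])
  also have "\<dots> \<le> norm (\<phi> T - \<psi> T) + norm (\<psi> T - k0)"
    using dist_triangle[of "\<phi> T" k0 "\<psi> T"] unfolding y_def dist_norm .
  also have "\<dots> < \<epsilon>" using part1 part2 assms by simp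
  finally have inf: "infdist y kasner_circle < \<epsilon>" .
  have T_in: "T \<in> {0..T}" using T0 by simp
  have yc: "wh_constraint y"
    using apriori(1)[OF fsol z0 _ _ _ T_in] gx0 \<phi>(2) unfolding good_def constraint_Cf y_def by auto
  have sg: "cN1 y > 0" "cN2 y > 0" "cN3 y < 0"
  proof -
    note A = apriori_sign[OF fsol z0 T_in]
    have "cN1 (\<phi> T) * \<delta> > 0" using A(1) \<delta> \<phi>(2) by (simp add: x0_def)
    then show "cN1 y > 0" using \<delta> by (simp add: y_def zero_less_mult_iff)
    have "cN2 (\<phi> T) * (r + \<delta>/4) > 0" using A(2) \<delta> rpos \<phi>(2) by (simp add: x0_def)
    then show "cN2 y > 0" using \<delta> rpos by (simp add: y_def zero_less_mult_iff)
    have "cN3 (\<phi> T) * (- (r - \<delta>/4)) > 0" using A(3) rd \<phi>(2) by (simp add: x0_def)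
    then show "cN3 y < 0" using rd by (simp add: y_def zero_less_mult_iff)
  qed
  have yV: "bianchi_VIII y"
    using VIII_from_signs[OF sg, of "cS1 y" "cS2 y"] state_eq[of y] by simp
  have Phi_y: "Phi (-T) y = x0"
    using Phi_eq[OF shift_solution[OF \<phi>(1), of T], of "-T"] \<phi>(2) by (simp add: y_def)
  have fin: "case Phi (-T) y of (sp, sm, n1, n2, n3) \<Rightarrow>
              bianchi_VIII (sp, sm, n1, n2, n3) \<and>
              \<bar>n1 * n2\<bar> + \<bar>n2 * n3\<bar> + \<bar>n3 * n1\<bar> \<ge> 1/4"
  proof -
    have V: "bianchi_VIII (0, 0, \<delta>, r + \<delta>/4, - (r - \<delta>/4))"
      by (rule VIII_from_signs) (use \<delta> rpos rd in auto)
    have "\<bar>(r + \<delta>/4) * (- (r - \<delta>/4))\<bar> = (r + \<delta>/4) * (r - \<delta>/4)"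
      using rd rpos \<delta> by (simp add: abs_mult)
    also have "\<dots> = r\<^sup>2 - \<delta>\<^sup>2/16" by (simp add: power2_eq_square algebra_simps)
    also have "\<dots> \<ge> 1/4" using r2 dd by linarith
    finally have X: "1/4 \<le> \<bar>(r + \<delta>/4) * (- (r - \<delta>/4))\<bar>" .
    have "\<bar>\<delta> * (r + \<delta>/4)\<bar> + \<bar>(r + \<delta>/4) * (- (r - \<delta>/4))\<bar> + \<bar>(- (r - \<delta>/4)) * \<delta>\<bar> \<ge> 1/4"
      using X abs_ge_zero[of "\<delta> * (r + \<delta>/4)"] abs_ge_zero[of "(- (r - \<delta>/4)) * \<delta>"] by linarith
    then show ?thesis unfolding Phi_y x0_def prod.case by (intro conjI V)
  qed
  have all: "bianchi_VIII y \<and> wh_constraint y \<and> infdist y kasner_circle < \<epsilon> \<and> T > 0 \<and>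
           (case Phi (-T) y of (sp, sm, n1, n2, n3) \<Rightarrow>
              bianchi_VIII (sp, sm, n1, n2, n3) \<and>
              \<bar>n1 * n2\<bar> + \<bar>n2 * n3\<bar> + \<bar>n3 * n1\<bar> \<ge> 1/4)"
    by (intro conjI yV yc inf T0 fin)
  show ?thesis by (rule exI[of _ y], rule exI[of _ T], rule all)
qed


end
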